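(* Let $(L,\mu,\nabla)$ be a gerbe datum on $M\rtimes\Gamma$ with direct sum bundle $\mathcal E$, let $\mathcal A=\Gamma^\infty_c(\mathrm{End}\,\mathcal E)$ and $\mathcal B=C^\infty_c(M\rtimes\Gamma,L)$. For a $\Gamma$-invariant cochain $c\in CC^n(\mathcal A)^\Gamma$ define $\Psi_2(c)\in CC^n(\mathcal B)$ by multilinearity from its values on elementary arguments: for $g_0,\dots,g_n\in\Gamma$ and $a_{g_i}\in\Gamma^\infty_c(L_{g_i})$, $\Psi_2(c)(a_{g_0},a_{g_1},\dots,a_{g_n})=c\big(E_{1,g_0}(a_{g_0}),E_{g_0,g_0g_1}(a_{g_1}^{g_0}),\dots,E_{g_0\cdots g_{n-1},\,g_0\cdots g_n}(a_{g_n}^{g_0\cdots g_{n-1}})\big)$ if $g_0g_1\cdots g_n=1$, and $=0$ otherwise; and for the unit, $\Psi_2(c)(\lambda1,a_{g_1},\dots,a_{g_n})=\lambda\,c\big(1,E_{1,g_1}(a_{g_1}),E_{g_1,g_1g_2}(a_{g_2}^{g_1}),\dots,E_{g_1\cdots g_{n-1},g_1\cdots g_n}(a_{g_n}^{g_1\cdots g_{n-1}})\big)$ if $g_1\cdots g_n=1$, and $=0$ otherwise. Then $\Psi_2$ commutes with each operator $d^i$ and each operator $\bar s^i$ (defined in the context); consequently $\Psi_2\circ b=b\circ\Psi_2$, $\Psi_2\circ B=B\circ\Psi_2$, and $\Psi_2$ extends $u$-linearly to a morphism of complexes $(CC^\bullet(\mathcal A)^\Gamma[u^{-1},u],b+uB)\to(CC^\bullet(\mathcal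 B)[u^{-1},u],b+uB)$.
   Context: Let $M$ be a smooth manifold with a smooth right action of a discrete group $\Gamma$, $(x,g)\mapsto xg$; for a bundle, section or form, a superscript $g$ denotes pullback along $x\mapsto xg$ (e.g. $s^g(x)=s(xg)$). A gerbe datum on $M\rtimes\Gamma$ consists of complex line bundles $L_g\to M$ ($g\in\Gamma$), isomorphisms $\mu_{g,h}:L_g\otimes(L_h)^g\to L_{gh}$ satisfying $\mu_{gh,k}\circ(\mu_{g,h}\otimes\mathrm{id})=\mu_{g,hk}\circ(\mathrm{id}\otimes(\mu_{h,k})^g)$ on $L_g\otimes(L_h)^g\otimes(L_k)^{gh}$, and connections $\nabla_g$ on $L_g$ (the connections play no role here). The direct sum bundle is $\mathcal E=\bigoplus_{g\in\Gamma}L_g\to M$. For a section $f$ of $\mathrm{End}\,\mathcal E$ write $E_{g,h}(f)\in\Gamma^\infty(\mathrm{Hom}(L_g,L_h))$ for its matrix components. $\mathcal A=\Gamma^\infty_c(\mathrm{End}\,\mathcal E)$ is the space of sections with compactly supported components, only finitely many nonzero, with product given by $E_{h,k}(f_1f_2)=\sum_{g}E_{g,k}(f_2)\circ E_{h,g}(f_1)$. For $k,h\in\Gamma$ and a section $b$ of $(L_h)^k$, $E_{k,kh}(b)$ denotes the section $v\mapsto\mu_{k,h}(v\otimes b)$ of $\mathrm{Hom}(L_k,L_{kh})$ (so a section $a$ of $L_g$ gives $E_{1,g}(a)\in\Gamma^\infty(\mathrm{Hom}(L_1,L_g))$). $\Gamma$ acts on $\mathcal A$ by $g\cdot E_{g_1,g_2}(f)=\mu_{g,g_2}\circ(\mathrm{id}\otimes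 f^g)\circ\mu_{g,g_1}^{-1}\in\Gamma^\infty(\mathrm{Hom}(L_{gg_1},L_{gg_2}))$, and trivially on the unit. The twisted convolution algebra $\mathcal B=C^\infty_c(M\rtimes\Gamma,L)$ consists of compactly supported sections of the bundle over $M\times\Gamma$ equal to $L_g$ on $M\times\{g\}$, i.e. finite sums $\sum_g a_g$ with $a_g\in\Gamma^\infty_c(L_g)$, with product $(f_1*f_2)(x,g)=\sum_{g_1g_2=g}\mu_{g_1,g_2}\big(f_1(x,g_1)\otimes f_2(xg_1,g_2)\big)$; thus $a_g*a_h=\mu_{g,h}(a_g\otimes a_h^g)\in\Gamma^\infty_c(L_{gh})$. For an algebra $\mathcal C$ with unitization $\widetilde{\mathcal C}=\mathcal C\oplus\mathbb C$, $CC^n(\mathcal C)$ is the space of linear functionals on $\widetilde{\mathcal C}\otimes\mathcal C^{\otimes n}$. For $f\in CC^n(\mathcal C)$ define $d^if\in CC^{n+1}(\mathcal C)$ by $(d^if)(\tilde a_0,a_1,\dots,a_{n+1})=f(\tilde a_0,\dots,a_ia_{i+1},\dots,a_{n+1})$ for $0\le i\le n$ and $(d^{n+1}f)(\tilde a_0,\dots,a_{n+1})=f(a_{n+1}\tilde a_0,a_1,\dots,a_n)$; for $f\in CC^{n+1}(\mathcal C)$ define $(\bar s^if)(\tilde a_0,a_1,\dots,a_n)=(-1)^{ni}f(1,a_i,\dots,a_n,a_0,\dots,a_{i-1})$, $0\le i\le n$, where $a_0$ is the $\mathcal C$-component of $\tilde a_0$. Then $b=\sum_i d^i$ and $B=\sum_i\bar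 s^i$, and $u$ is a formal variable. A cochain $c\in CC^n(\mathcal A)$ is $\Gamma$-invariant if $c(g\cdot x_0,\dots,g\cdot x_n)=c(x_0,\dots,x_n)$ for all $g\in\Gamma$; these form $CC^n(\mathcal A)^\Gamma$. *)

theory Defs
  imports Complex_Main
begin

text \<open>The unitization is modelled as pairs (lambda, a) standing for lambda*1 + a.
  A cochain in CC^n is a function of (a0~, [a1,...,an]); it is a genuine element
  of CC^n when it is multilinear on the carrier (predicate cochain_on).\<close>

record 'a calg =
  acarr :: "'a set"
  amul  :: "'a \<Rightarrow> 'a \<Rightarrow> 'a"
  aadd  :: "'a \<Rightarrow> 'a \<Rightarrow> 'a"
  asc   :: "complex \<Rightarrow> 'a \<Rightarrow> 'a"
  azero :: "'a"

type_synonym 'a cochain = "complex \<times> 'a \<Rightarrow> 'a list \<Rightarrow> complex"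

definition cochain_args :: "'a calg \<Rightarrow> nat \<Rightarrow> complex \<times> 'a \<Rightarrow> 'a list \<Rightarrow> bool" where
  "cochain_args R n x0 as \<longleftrightarrow> snd x0 \<in> acarr R \<and> length as = n \<and> set as \<subseteq> acarr R"

definition cochain_on :: "'a calg \<Rightarrow> nat \<Rightarrow> 'a cochain \<Rightarrow> bool" where
  "cochain_on R n c \<longleftrightarrow>
     (\<forall>l l' a a' as \<alpha> \<beta>. a \<in> acarr R \<longrightarrow> a' \<in> acarr R \<longrightarrow> length as = n \<longrightarrow> set as \<subseteq> acarr R \<longrightarrow>
        c (\<alpha> * l + \<beta> * l', aadd R (asc R \<alpha> a) (asc R \<beta> a')) as = \<alpha> * c (l, a) as + \<beta> * c (l', a') as)
   \<and> (\<forall>x0 as i y z \<alpha> \<beta>. cochain_args R n x0 as \<longrightarrow> i < n \<longrightarrow> y \<in> acarr R \<longrightarrow> z \<in> acarr R \<longrightarrow>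
        c x0 (as[i := aadd R (asc R \<alpha> y) (asc R \<beta> z)]) = \<alpha> * c x0 (as[i := y]) + \<beta> * c x0 (as[i := z]))"

text \<open>Face operators d^i : CC^n \<rightarrow> CC^(n+1), 0 \<le> i \<le> n+1; the argument list is [a1,...,a(n+1)].\<close>
definition dface :: "'a calg \<Rightarrow> nat \<Rightarrow> nat \<Rightarrow> 'a cochain \<Rightarrow> 'a cochain" where
  "dface R n i f = (\<lambda>(l, a0) as.
     if i = 0 then f (0, aadd R (asc R l (as ! 0)) (amul R a0 (as ! 0))) (tl as)
     else if i \<le> n then f (l, a0) (take (i - 1) as @ [amul R (as ! (i - 1)) (as ! i)] @ drop (i + 1) as)
     else f (0, aadd R (asc R l (as ! n)) (amul R (as ! n) a0)) (take n as))"

text \<open>Operators sbar^i : CC^(n+1) \<rightarrow> CC^n, 0 \<le> i \<le> n; the argument list is [a1,...,an];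
  the arguments of f are 1, a_i, ..., a_n, a_0, ..., a_(i-1).\<close>
definition sbar :: "'a calg \<Rightarrow> nat \<Rightarrow> nat \<Rightarrow> 'a cochain \<Rightarrow> 'a cochain" where
  "sbar R n i f = (\<lambda>(l, a0) as.
     if i = 0 then f (1, azero R) (a0 # as)
     else (-1) ^ (n * i) * f (1, azero R) (drop (i - 1) as @ [a0] @ take (i - 1) as))"

definition bop :: "'a calg \<Rightarrow> nat \<Rightarrow> 'a cochain \<Rightarrow> 'a cochain" where
  "bop R n f = (\<lambda>x0 as. \<Sum>i\<le>Suc n. dface R n i f x0 as)"

definition Bop :: "'a calg \<Rightarrow> nat \<Rightarrow> 'a cochain \<Rightarrow> 'a cochain" where
  "Bop R n f = (\<lambda>x0 as. \<Sum>i\<le>n. sbar R n i f x0 as)"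

text \<open>Each fibre (L_g)_x is identified (set-theoretically, not smoothly) with C.
  Then mu_(g,h) at x is multiplication by a nonzero number m g h x, and a section of
  Hom(L_g, L_h) is a complex-valued function. The smooth structure is recorded by the
  spaces Sec g (compactly supported smooth sections of L_g) and HomSec g h
  (compactly supported smooth sections of Hom(L_g, L_h)), written in this identification.
  The group Gamma is written additively (type class group_add, not necessarily
  commutative): g + h is the product gh and 0 is the unit. act x g is the right action xg.\<close>

definition subspace_C :: "('m \<Rightarrow> complex) set \<Rightarrow> bool" where
  "subspace_C S \<longleftrightarrow> (\<lambda>_. 0) \<in> S \<and> (\<forall>f\<in>S. \<forall>f'\<in>S. (\<lambda>x. f x + f' x) \<in> S)
       \<and> (\<forall>f\<in>S. \<forall>\<alpha>. (\<lambda>x. \<alpha> * f x) \<in> S)"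

definition gerbe_datum ::
  "('m \<Rightarrow> 'g::group_add \<Rightarrow> 'm) \<Rightarrow> ('g \<Rightarrow> 'g \<Rightarrow> 'm \<Rightarrow> complex)
   \<Rightarrow> ('g \<Rightarrow> ('m \<Rightarrow> complex) set) \<Rightarrow> ('g \<Rightarrow> 'g \<Rightarrow> ('m \<Rightarrow> complex) set) \<Rightarrow> bool" where
  "gerbe_datum act m Sec HomSec \<longleftrightarrow>
     \<comment> \<open>right action\<close>
     (\<forall>x. act x 0 = x) \<and> (\<forall>x g h. act (act x g) h = act x (g + h))
     \<comment> \<open>mu_(g,h) is an isomorphism\<close>
   \<and> (\<forall>g h x. m g h x \<noteq> 0)
     \<comment> \<open>associativity of mu\<close>
   \<and> (\<forall>g h k x. m (g + h) k x * m g h x = m g (h + k) x * m h k (act x g))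
     \<comment> \<open>section spaces are vector spaces\<close>
   \<and> (\<forall>g. subspace_C (Sec g)) \<and> (\<forall>g h. subspace_C (HomSec g h))
     \<comment> \<open>for a in Sec h, E_(k,kh)(a^k) is a smooth compactly supported section of Hom(L_k,L_kh)\<close>
   \<and> (\<forall>k h a. a \<in> Sec h \<longrightarrow> (\<lambda>x. m k h x * a (act x k)) \<in> HomSec k (k + h))
     \<comment> \<open>composition of sections of Hom bundles\<close>
   \<and> (\<forall>g h k \<phi> \<psi>. \<phi> \<in> HomSec g h \<longrightarrow> \<psi> \<in> HomSec h k \<longrightarrow> (\<lambda>x. \<psi> x * \<phi> x) \<in> HomSec g k)
     \<comment> \<open>a_g * a_h = mu_(g,h)(a_g (x) a_h^g)\<close>
   \<and> (\<forall>g h a a'. a \<in> Sec g \<longrightarrow> a' \<in> Sec h \<longrightarrow> (\<lambda>x. m g h x * a x * a' (act x g)) \<in> Sec (g + h))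
     \<comment> \<open>the Gamma-action maps sections of Hom(L_g1,L_g2) to sections of Hom(L_gg1,L_gg2)\<close>
   \<and> (\<forall>g g1 g2 \<phi>. \<phi> \<in> HomSec g1 g2 \<longrightarrow>
        (\<lambda>x. m g g2 x * \<phi> (act x g) / m g g1 x) \<in> HomSec (g + g1) (g + g2))"

text \<open>An element f is its matrix: f g h x = E_(g,h)(f) at x.\<close>
type_synonym ('g, 'm) matA = "'g \<Rightarrow> 'g \<Rightarrow> 'm \<Rightarrow> complex"

definition suppA :: "('g, 'm) matA \<Rightarrow> ('g \<times> 'g) set" where
  "suppA f = {(g, h). f g h \<noteq> (\<lambda>_. 0)}"

definition algA :: "('g \<Rightarrow> 'g \<Rightarrow> ('m \<Rightarrow> complex) set) \<Rightarrow> ('g, 'm) matA calg" where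
  "algA HomSec = \<lparr> acarr = {f. finite (suppA f) \<and> (\<forall>g h. f g h \<in> HomSec g h)},
     amul = (\<lambda>f1 f2 h k x. \<Sum>g\<in>{g. f1 h g \<noteq> (\<lambda>_. 0)}. f2 g k x * f1 h g x),
     aadd = (\<lambda>f1 f2 g h x. f1 g h x + f2 g h x),
     asc = (\<lambda>\<alpha> f g h x. \<alpha> * f g h x),
     azero = (\<lambda>g h x. 0) \<rparr>"

text \<open>The Gamma-action on A: (g . f)_(g g1, g g2) = mu_(g,g2) o (id (x) f^g) o mu_(g,g1)^(-1).\<close>
definition actA :: "('m \<Rightarrow> 'g::group_add \<Rightarrow> 'm) \<Rightarrow> ('g \<Rightarrow> 'g \<Rightarrow> 'm \<Rightarrow> complex) \<Rightarrow> 'g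
                     \<Rightarrow> ('g, 'm) matA \<Rightarrow> ('g, 'm) matA" where
  "actA act m g f = (\<lambda>h k x. m g (- g + k) x * f (- g + h) (- g + k) (act x g) / m g (- g + h) x)"

text \<open>Gamma-invariance (Gamma acts trivially on the unit).\<close>
definition invariant_cochain :: "('m \<Rightarrow> 'g::group_add \<Rightarrow> 'm) \<Rightarrow> ('g \<Rightarrow> 'g \<Rightarrow> 'm \<Rightarrow> complex)
     \<Rightarrow> ('g \<Rightarrow> 'g \<Rightarrow> ('m \<Rightarrow> complex) set) \<Rightarrow> nat \<Rightarrow> ('g, 'm) matA cochain \<Rightarrow> bool" where
  "invariant_cochain act m HomSec n c \<longleftrightarrow>
     (\<forall>g l a0 as. cochain_args (algA HomSec) n (l, a0) as \<longrightarrow>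
        c (l, actA act m g a0) (map (actA act m g) as) = c (l, a0) as)"

text \<open>E_(k,kh)(a^k) for a section a of L_h: the matrix with the single entry (k, kh).\<close>
definition Eel :: "('m \<Rightarrow> 'g::group_add \<Rightarrow> 'm) \<Rightarrow> ('g \<Rightarrow> 'g \<Rightarrow> 'm \<Rightarrow> complex) \<Rightarrow> 'g \<Rightarrow> 'g
                   \<Rightarrow> ('m \<Rightarrow> complex) \<Rightarrow> ('g, 'm) matA" where
  "Eel act m k h a = (\<lambda>g g' x. if g = k \<and> g' = k + h then m k h x * a (act x k) else 0)"

text \<open>An element f is given by f g x = f(x, g).\<close>
type_synonym ('g, 'm) elB = "'g \<Rightarrow> 'm \<Rightarrow> complex"

definition suppB :: "('g, 'm) elB \<Rightarrow> 'g set" where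
  "suppB f = {g. f g \<noteq> (\<lambda>_. 0)}"

definition algB :: "('m \<Rightarrow> 'g::group_add \<Rightarrow> 'm) \<Rightarrow> ('g \<Rightarrow> 'g \<Rightarrow> 'm \<Rightarrow> complex)
                    \<Rightarrow> ('g \<Rightarrow> ('m \<Rightarrow> complex) set) \<Rightarrow> ('g, 'm) elB calg" where
  "algB act m Sec = \<lparr> acarr = {f. finite (suppB f) \<and> (\<forall>g. f g \<in> Sec g)},
     amul = (\<lambda>f1 f2 g x. \<Sum>g1\<in>suppB f1. m g1 (- g1 + g) x * f1 g1 x * f2 (- g1 + g) (act x g1)),
     aadd = (\<lambda>f1 f2 g x. f1 g x + f2 g x),
     asc = (\<lambda>\<alpha> f g x. \<alpha> * f g x),
     azero = (\<lambda>g x. 0) \<rparr>"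

definition pp :: "'g::group_add list \<Rightarrow> nat \<Rightarrow> 'g" where
  "pp gs j = sum_list (take j gs)"

text \<open>The elementary arguments E_(1,g0)(a_g0), E_(g0,g0g1)(a_g1^g0), ... for
  fs = [f_0,...,f_k] and group elements gs = [g_0,...,g_k], with a_gj = f_j(., g_j).\<close>
definition Eargs :: "('m \<Rightarrow> 'g::group_add \<Rightarrow> 'm) \<Rightarrow> ('g \<Rightarrow> 'g \<Rightarrow> 'm \<Rightarrow> complex)
                     \<Rightarrow> ('g, 'm) elB list \<Rightarrow> 'g list \<Rightarrow> ('g, 'm) matA list" where
  "Eargs act m fs gs = map (\<lambda>j. Eel act m (pp gs j) (gs ! j) ((fs ! j) (gs ! j))) [0..<length gs]"

definition labels :: "('g, 'm) elB list \<Rightarrow> 'g list set" where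
  "labels fs = {gs. length gs = length fs \<and> (\<forall>j<length fs. gs ! j \<in> suppB (fs ! j))}"

text \<open>Psi_2(c), extended multilinearly from the elementary arguments.\<close>
definition psi2 :: "('m \<Rightarrow> 'g::group_add \<Rightarrow> 'm) \<Rightarrow> ('g \<Rightarrow> 'g \<Rightarrow> 'm \<Rightarrow> complex)
                   \<Rightarrow> ('g, 'm) matA cochain \<Rightarrow> ('g, 'm) elB cochain" where
  "psi2 act m c = (\<lambda>(l, f0) fs.
      (\<Sum>gs\<in>{gs \<in> labels (f0 # fs). sum_list gs = 0}.
          c (0, hd (Eargs act m (f0 # fs) gs)) (tl (Eargs act m (f0 # fs) gs)))
    + l * (\<Sum>gs\<in>{gs \<in> labels fs. sum_list gs = 0}.
          c (1, (\<lambda>g h x. 0)) (Eargs act m fs gs)))"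

end

theory Submission
  imports Defs
begin

lemma in_listset_iff:
  "xs \<in> listset Ts \<longleftrightarrow> length xs = length Ts \<and> (\<forall>i<length Ts. xs ! i \<in> Ts ! i)"
proof (induction Ts arbitrary: xs)
  case Nil then show ?case by auto
next
  case (Cons T Ts)
  show ?case
  proof (cases xs)
    case Nil then show ?thesis by (auto simp: set_Cons_def)
  next
    case (Cons y ys)
    have "(\<forall>i<length (T#Ts). xs ! i \<in> (T#Ts) ! i) \<longleftrightarrow> y \<in> T \<and> (\<forall>i<length Ts. ys ! i \<in> Ts ! i)"
      using Cons by (auto simp: less_Suc_eq_0_disj)
    then show ?thesis using Cons.IH[of ys] Cons by (auto simp: set_Cons_def listset.simps(2))
  qed
qed

declare listset.simps(2)[simp del]

lemma listset_Cons_img: "listset (A # As) = (\<lambda>(a, xs). a # xs) ` (A \<times> listset As)"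
  by (auto simp: set_Cons_def listset.simps(2))

lemma finite_listset: "(\<forall>T\<in>set Ts. finite T) \<Longrightarrow> finite (listset Ts)"
  by (induction Ts) (auto simp: listset_Cons_img simp del: listset.simps(2))

lemma sum_listset_Cons:
  assumes "finite A" "\<forall>T\<in>set As. finite T"
  shows "(\<Sum>xs\<in>listset (A # As). f xs) = (\<Sum>a\<in>A. \<Sum>xs\<in>listset As. f (a # xs))"
proof -
  have inj: "inj_on (\<lambda>(a, xs). a # xs) (A \<times> listset As)" by (auto simp: inj_on_def)
  have "(\<Sum>xs\<in>listset (A # As). f xs) = (\<Sum>p\<in>A \<times> listset As. f (fst p # snd p))"
    unfolding listset_Cons_img by (subst sum.reindex[OF inj]) (auto simp del: listset.simps(2) intro!: sum.cong)
  also have "\<dots> = (\<Sum>a\<in>A. \<Sum>xs\<in>listset As. f (a # xs))"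
    by (simp add: sum.cartesian_product case_prod_beta)
  finally show ?thesis .
qed

lemma sum_listset_append:
  assumes "\<forall>T\<in>set As. finite T" "\<forall>T\<in>set Bs. finite T"
  shows "(\<Sum>xs\<in>listset (As @ Bs). f xs) = (\<Sum>xs\<in>listset As. \<Sum>ys\<in>listset Bs. f (xs @ ys))"
  using assms
proof (induction As arbitrary: f)
  case Nil then show ?case by simp
next
  case (Cons A As)
  have "(\<Sum>xs\<in>listset ((A # As) @ Bs). f xs) = (\<Sum>a\<in>A. \<Sum>xs\<in>listset (As @ Bs). f (a # xs))"
    using Cons.prems sum_listset_Cons[of A "As @ Bs" f] by auto
  also have "\<dots> = (\<Sum>a\<in>A. \<Sum>xs\<in>listset As. \<Sum>ys\<in>listset Bs. f (a # xs @ ys))"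
  proof (rule sum.cong[OF refl])
    fix a show "(\<Sum>xs\<in>listset (As @ Bs). f (a # xs)) = (\<Sum>xs\<in>listset As. \<Sum>ys\<in>listset Bs. f (a # xs @ ys))"
      using Cons.IH[of "\<lambda>xs. f (a # xs)"] Cons.prems by auto
  qed
  also have "\<dots> = (\<Sum>xs\<in>listset (A # As). \<Sum>ys\<in>listset Bs. f (xs @ ys))"
    using Cons.prems by (simp add: sum_listset_Cons del: listset.simps(2))
  finally show ?case .
qed

lemma sum_listset_single: "(\<Sum>xs\<in>listset [A]. f xs) = (\<Sum>a\<in>A. f [a])"
  by (simp add: sum.reindex inj_on_def listset.simps)

locale gd =
  fixes act :: "'m \<Rightarrow> 'g::group_add \<Rightarrow> 'm"
    and m :: "'g \<Rightarrow> 'g \<Rightarrow> 'm \<Rightarrow> complex"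
    and Sec :: "'g \<Rightarrow> ('m \<Rightarrow> complex) set"
    and HomSec :: "'g \<Rightarrow> 'g \<Rightarrow> ('m \<Rightarrow> complex) set"
  assumes gerbe: "gerbe_datum act m Sec HomSec"
begin

lemma act0[simp]: "act x 0 = x" using gerbe by (simp add: gerbe_datum_def)
lemma act_act[simp]: "act (act x g) h = act x (g + h)" using gerbe by (simp add: gerbe_datum_def)
lemma m_nz[simp]: "m g h x \<noteq> 0" using gerbe by (simp add: gerbe_datum_def)
lemma m_assoc: "m (g + h) k x * m g h x = m g (h + k) x * m h k (act x g)"
  using gerbe by (simp add: gerbe_datum_def)
lemma Sec_sub: "subspace_C (Sec g)" using gerbe by (simp add: gerbe_datum_def)
lemma Hom_sub: "subspace_C (HomSec g h)" using gerbe by (simp add: gerbe_datum_def)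
lemma Sec0[simp]: "(\<lambda>_. 0) \<in> Sec g" using Sec_sub by (simp add: subspace_C_def)
lemma Hom0[simp]: "(\<lambda>_. 0) \<in> HomSec g h" using Hom_sub by (simp add: subspace_C_def)
lemma Sec_lin: "a \<in> Sec g \<Longrightarrow> b \<in> Sec g \<Longrightarrow> (\<lambda>x. \<alpha> * a x + \<beta> * b x) \<in> Sec g"
  using Sec_sub[of g] unfolding subspace_C_def by metis
lemma Hom_add: "a \<in> HomSec g h \<Longrightarrow> b \<in> HomSec g h \<Longrightarrow> (\<lambda>x. a x + b x) \<in> HomSec g h"
  using Hom_sub[of g h] unfolding subspace_C_def by metis
lemma Hom_sc: "a \<in> HomSec g h \<Longrightarrow> (\<lambda>x. \<alpha> * a x) \<in> HomSec g h"
  using Hom_sub[of g h] unfolding subspace_C_def by metis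
lemma Eel_Hom: "a \<in> Sec h \<Longrightarrow> (\<lambda>x. m k h x * a (act x k)) \<in> HomSec k (k + h)"
  using gerbe by (simp add: gerbe_datum_def)
lemma Hom_comp: "\<phi> \<in> HomSec g h \<Longrightarrow> \<psi> \<in> HomSec h k \<Longrightarrow> (\<lambda>x. \<psi> x * \<phi> x) \<in> HomSec g k"
  using gerbe by (simp add: gerbe_datum_def)
lemma Sec_mul: "a \<in> Sec g \<Longrightarrow> a' \<in> Sec h \<Longrightarrow> (\<lambda>x. m g h x * a x * a' (act x g)) \<in> Sec (g + h)"
  using gerbe by (simp add: gerbe_datum_def)

lemma m0_const: "m 0 h x = m 0 0 x"
  using m_assoc[of 0 0 h x] by simp

abbreviation "A \<equiv> algA HomSec"
abbreviation "B \<equiv> algB act m Sec"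
abbreviation "CA \<equiv> acarr A"
abbreviation "zA \<equiv> (\<lambda>(g::'g) (h::'g) (x::'m). 0::complex)"

lemma zA_carr[simp]: "zA \<in> CA"
  by (simp add: algA_def suppA_def)

lemma Eel_eq: "Eel act m p h a g g' = (if g = p \<and> g' = p + h then (\<lambda>x. m p h x * a (act x p)) else (\<lambda>x. 0))"
  by (auto simp: Eel_def)

lemma Eel_carr: "a \<in> Sec h \<Longrightarrow> Eel act m p h a \<in> CA"
proof -
  assume a: "a \<in> Sec h"
  have "suppA (Eel act m p h a) \<subseteq> {(p, p + h)}" by (auto simp: suppA_def Eel_eq)
  then have "finite (suppA (Eel act m p h a))" using finite_subset by blast
  moreover have "\<forall>g g'. Eel act m p h a g g' \<in> HomSec g g'"
    using Eel_Hom[OF a] by (auto simp: Eel_eq)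
  ultimately show ?thesis by (simp add: algA_def)
qed

lemma Eel_zero[simp]: "Eel act m p h (\<lambda>x. 0) = zA"
  by (auto simp: Eel_def fun_eq_iff)

lemma Eel_lin: "Eel act m p h (\<lambda>x. \<alpha> * a x + \<beta> * b x)
   = aadd A (asc A \<alpha> (Eel act m p h a)) (asc A \<beta> (Eel act m p h b))"
  by (auto simp: Eel_def algA_def fun_eq_iff algebra_simps)

lemma actA_Eel: "actA act m q (Eel act m p h a) = Eel act m (q + p) h a"
proof (intro ext)
  fix g g' x
  have c: "(- q + g = p \<and> - q + g' = p + h) \<longleftrightarrow> (g = q + p \<and> g' = q + p + h)"
    by (auto simp: add.assoc)
  have e: "m q (p + h) x * (m p h (act x q) * y) / m q p x = m (q + p) h x * y" for y
    using m_assoc[of q p h x] by (simp add: field_simps)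
  show "actA act m q (Eel act m p h a) g g' x = Eel act m (q + p) h a g g' x"
    unfolding actA_def Eel_def using c e
    by (auto simp: add.assoc)
qed

lemma amulA: "amul A f1 f2 = (\<lambda>h k x. \<Sum>g\<in>{g. f1 h g \<noteq> (\<lambda>_. 0)}. f2 g k x * f1 h g x)"
  by (simp add: algA_def)
lemma aaddA: "aadd A f1 f2 = (\<lambda>g h x. f1 g h x + f2 g h x)" by (simp add: algA_def)
lemma ascA: "asc A \<alpha> f = (\<lambda>g h x. \<alpha> * f g h x)" by (simp add: algA_def)
lemma azeroA: "azero A = zA" by (simp add: algA_def)
lemma acarrA: "acarr A = {f. finite (suppA f) \<and> (\<forall>g h. f g h \<in> HomSec g h)}" by (simp add: algA_def)

lemma amul_Eel: "amul A (Eel act m p g a) (Eel act m (p + g) g' b)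
   = Eel act m p (g + g') (\<lambda>x. m g g' x * a x * b (act x g))"
proof (intro ext)
  fix h k x
  let ?S = "{j. Eel act m p g a h j \<noteq> (\<lambda>_. 0)}"
  show "amul A (Eel act m p g a) (Eel act m (p + g) g' b) h k x = Eel act m p (g + g') (\<lambda>x. m g g' x * a x * b (act x g)) h k x"
  proof (cases "h = p \<and> (\<lambda>x. m p g x * a (act x p)) \<noteq> (\<lambda>_. 0)")
    case True
    then have S: "?S = {p + g}" by (auto simp: Eel_eq)
    have e: "m (p + g) g' x * m p g x = m p (g + g') x * m g g' (act x p)" by (rule m_assoc)
    show ?thesis unfolding amulA S using True e
      by (auto simp: Eel_eq add.assoc)
  next
    case False
    then have S: "?S = {}" by (auto simp: Eel_eq)
    have z: "h = p \<Longrightarrow> a (act y p) = 0" for y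
      using False by (auto simp: fun_eq_iff)
    show ?thesis unfolding amulA S using z by (auto simp: Eel_eq)
  qed
qed

lemma Hom_sum: "finite S \<Longrightarrow> (\<forall>g\<in>S. \<phi> g \<in> HomSec h k) \<Longrightarrow> (\<lambda>x. \<Sum>g\<in>S. \<phi> g x) \<in> HomSec h k"
  by (induction S rule: finite_induct) (auto intro: Hom_add)

lemma amul_carr:
  assumes f1: "f1 \<in> CA" and f2: "f2 \<in> CA"
  shows "amul A f1 f2 \<in> CA"
proof -
  have fin1: "finite (suppA f1)" and fin2: "finite (suppA f2)"
    and h1: "\<And>g h. f1 g h \<in> HomSec g h" and h2: "\<And>g h. f2 g h \<in> HomSec g h"
    using f1 f2 by (auto simp: acarrA)
  have finS: "finite {g. f1 h g \<noteq> (\<lambda>_. 0)}" for h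
  proof -
    have "{g. f1 h g \<noteq> (\<lambda>_. 0)} \<subseteq> snd ` suppA f1" by (force simp: suppA_def)
    then show ?thesis using fin1 finite_subset by blast
  qed
  have "suppA (amul A f1 f2) \<subseteq> fst ` suppA f1 \<times> snd ` suppA f2"
  proof
    fix hk assume "hk \<in> suppA (amul A f1 f2)"
    then obtain h k where hk: "hk = (h, k)" and nz: "amul A f1 f2 h k \<noteq> (\<lambda>_. 0)"
      by (auto simp: suppA_def)
    have "\<exists>g. f1 h g \<noteq> (\<lambda>_. 0) \<and> f2 g k \<noteq> (\<lambda>_. 0)"
    proof (rule ccontr)
      assume "\<not> ?thesis"
      then have "amul A f1 f2 h k = (\<lambda>_. 0)" unfolding amulA by (fastforce simp: fun_eq_iff intro!: sum.neutral)
      then show False using nz by simp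
    qed
    then obtain g where "f1 h g \<noteq> (\<lambda>_. 0)" "f2 g k \<noteq> (\<lambda>_. 0)" by blast
    then have "(h, g) \<in> suppA f1" "(g, k) \<in> suppA f2" by (auto simp: suppA_def)
    then show "hk \<in> fst ` suppA f1 \<times> snd ` suppA f2" unfolding hk by force
  qed
  then have "finite (suppA (amul A f1 f2))" using fin1 fin2 finite_subset by blast
  moreover have "amul A f1 f2 h k \<in> HomSec h k" for h k
    unfolding amulA using finS[of h] by (auto intro!: Hom_sum Hom_comp h1 h2)
  ultimately show ?thesis by (simp add: acarrA)
qed

lemma amul_zero_right[simp]: "amul A f zA = zA" by (simp add: amulA)
lemma amul_zero_left[simp]: "amul A zA f = zA" by (simp add: amulA)

lemma actA_nz: "(actA act m q f h j \<noteq> (\<lambda>_. 0)) \<longleftrightarrow> f (- q + h) (- q + j) \<noteq> (\<lambda>_. 0)"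
proof
  assume "f (- q + h) (- q + j) \<noteq> (\<lambda>_. 0)"
  then obtain y where y: "f (- q + h) (- q + j) y \<noteq> 0" by auto
  have "actA act m q f h j (act y (- q)) \<noteq> 0" using y by (simp add: actA_def)
  then show "actA act m q f h j \<noteq> (\<lambda>_. 0)" by auto
qed (auto simp: actA_def fun_eq_iff)

lemma actA_amul: "actA act m q (amul A f1 f2) = amul A (actA act m q f1) (actA act m q f2)"
proof (intro ext)
  fix h k x
  let ?S = "{j. f1 (- q + h) j \<noteq> (\<lambda>_. 0)}"
  have S': "{j. actA act m q f1 h j \<noteq> (\<lambda>_. 0)} = (\<lambda>j. q + j) ` ?S"
  proof (rule set_eqI)
    fix j show "j \<in> {j. actA act m q f1 h j \<noteq> (\<lambda>_. 0)} \<longleftrightarrow> j \<in> (\<lambda>j. q + j) ` ?S"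
      unfolding actA_nz by (auto simp: image_iff)
  qed
  have inj: "inj_on (\<lambda>j. q + j) ?S" by (auto simp: inj_on_def)
  have "amul A (actA act m q f1) (actA act m q f2) h k x
      = (\<Sum>j\<in>?S. m q (- q + k) x * (f2 j (- q + k) (act x q) * f1 (- q + h) j (act x q)) / m q (- q + h) x)"
    unfolding amulA S' by (simp add: sum.reindex[OF inj] actA_def add.assoc[symmetric])
  also have "\<dots> = actA act m q (amul A f1 f2) h k x"
    by (simp add: actA_def amulA sum_distrib_left sum_divide_distrib)
  finally show "actA act m q (amul A f1 f2) h k x = amul A (actA act m q f1) (actA act m q f2) h k x" by simp
qed

end

fun EP :: "('m \<Rightarrow> 'g::group_add \<Rightarrow> 'm) \<Rightarrow> ('g \<Rightarrow> 'g \<Rightarrow> 'm \<Rightarrow> complex) \<Rightarrow> 'g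
     \<Rightarrow> ('g, 'm) elB list \<Rightarrow> 'g list \<Rightarrow> ('g, 'm) matA list" where
  "EP act m p (f # L) (g # gs) = Eel act m p g (f g) # EP act m (p + g) L gs"
| "EP act m p _ _ = []"

definition Phi :: "('m \<Rightarrow> 'g::group_add \<Rightarrow> 'm) \<Rightarrow> ('g \<Rightarrow> 'g \<Rightarrow> 'm \<Rightarrow> complex)
     \<Rightarrow> (('g, 'm) matA list \<Rightarrow> complex) \<Rightarrow> ('g, 'm) elB list \<Rightarrow> complex" where
  "Phi act m F L = (\<Sum>gs\<in>listset (map suppB L). if sum_list gs = 0 then F (EP act m 0 L gs) else 0)"

lemma EP_length: "length gs = length L \<Longrightarrow> length (EP act m p L gs) = length L"
  by (induction L arbitrary: gs p) (auto simp: length_Suc_conv)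

lemma EP_map: "length gs = length L \<Longrightarrow>
   map (\<lambda>j. Eel act m (p + pp gs j) (gs ! j) ((L ! j) (gs ! j))) [0..<length gs] = EP act m p L gs"
proof (induction L arbitrary: gs p)
  case Nil then show ?case by simp
next
  case (Cons f L)
  then obtain g gs' where gs: "gs = g # gs'" "length gs' = length L" by (auto simp: length_Suc_conv)
  have pp: "pp (g # gs') (Suc j) = g + pp gs' j" for j by (simp add: pp_def)
  show ?case using Cons.IH[of gs' "p + g"] gs
    by (simp add: map_upt_Suc pp pp_def add.assoc del: upt_Suc)
qed

lemma Eargs_EP: "length gs = length L \<Longrightarrow> Eargs act m L gs = EP act m 0 L gs"
  using EP_map[of gs L act m 0] by (simp add: Eargs_def)

lemma EP_nth: "length gs = length L \<Longrightarrow> j < length L \<Longrightarrow>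
   EP act m p L gs ! j = Eel act m (p + pp gs j) (gs ! j) ((L ! j) (gs ! j))"
  by (subst EP_map[symmetric]) auto

lemma EP_append: "length gs1 = length L1 \<Longrightarrow>
   EP act m p (L1 @ L2) (gs1 @ gs2) = EP act m p L1 gs1 @ EP act m (p + sum_list gs1) L2 gs2"
proof (induction L1 arbitrary: gs1 p)
  case Nil then show ?case by simp
next
  case (Cons f L)
  then obtain g gs' where gs: "gs1 = g # gs'" "length gs' = length L" by (auto simp: length_Suc_conv)
  then show ?case using Cons.IH[of gs' "p + g"] by (simp add: add.assoc)
qed

context gd begin

abbreviation "CB \<equiv> acarr B"

lemma acarrB: "acarr B = {f. finite (suppB f) \<and> (\<forall>g. f g \<in> Sec g)}" by (simp add: algB_def)
lemma amulB: "amul B f1 f2 = (\<lambda>g x. \<Sum>g1\<in>suppB f1. m g1 (- g1 + g) x * f1 g1 x * f2 (- g1 + g) (act x g1))"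
  by (simp add: algB_def)
lemma aaddB: "aadd B f1 f2 = (\<lambda>g x. f1 g x + f2 g x)" by (simp add: algB_def)
lemma ascB: "asc B \<alpha> f = (\<lambda>g x. \<alpha> * f g x)" by (simp add: algB_def)
lemma azeroB: "azero B = (\<lambda>g x. 0)" by (simp add: algB_def)

lemma EP_act: "EP act m (q + p) L gs = map (actA act m q) (EP act m p L gs)"
proof (induction L arbitrary: gs p)
  case Nil then show ?case by simp
next
  case (Cons f L) then show ?case by (cases gs) (simp_all add: actA_Eel add.assoc del: act_act)
qed

lemma EP_carr: "set L \<subseteq> CB \<Longrightarrow> set (EP act m p L gs) \<subseteq> CA"
proof (induction L arbitrary: gs p)
  case Nil then show ?case by simp
next
  case (Cons f L) then show ?case
    by (cases gs) (auto simp: acarrB intro!: Eel_carr)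
qed

lemma fin_supp: "set L \<subseteq> CB \<Longrightarrow> \<forall>T\<in>set (map suppB L). finite T"
  by (auto simp: acarrB)

lemma labels_listset: "labels L = listset (map suppB L)"
  by (auto simp: labels_def in_listset_iff)

lemma psi2_Phi:
  assumes "f0 \<in> CB" "set fs \<subseteq> CB"
  shows "psi2 act m c (l, f0) fs = Phi act m (\<lambda>E. c (0, hd E) (tl E)) (f0 # fs)
          + l * Phi act m (\<lambda>E. c (1, zA) E) fs"
proof -
  have f1: "finite (labels (f0 # fs))" "finite (labels fs)"
    unfolding labels_listset using assms by (auto intro!: finite_listset simp: acarrB)
  have "(\<Sum>gs\<in>{gs \<in> labels (f0 # fs). sum_list gs = 0}. c (0, hd (Eargs act m (f0 # fs) gs)) (tl (Eargs act m (f0 # fs) gs)))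
     = Phi act m (\<lambda>E. c (0, hd E) (tl E)) (f0 # fs)"
    unfolding Phi_def sum.inter_filter[OF f1(1)] labels_listset[symmetric]
    by (intro sum.cong refl) (auto simp: labels_def Eargs_EP)
  moreover have "(\<Sum>gs\<in>{gs \<in> labels fs. sum_list gs = 0}. c (1, zA) (Eargs act m fs gs))
     = Phi act m (\<lambda>E. c (1, zA) E) fs"
    unfolding Phi_def sum.inter_filter[OF f1(2)] labels_listset[symmetric]
    by (intro sum.cong refl) (auto simp: labels_def Eargs_EP)
  ultimately show ?thesis by (simp add: psi2_def)
qed

lemma Phi_cong: "(\<And>E. length E = length L \<Longrightarrow> set E \<subseteq> CA \<Longrightarrow> F E = F' E) \<Longrightarrow> set L \<subseteq> CB \<Longrightarrow> Phi act m F L = Phi act m F' L"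
  unfolding Phi_def by (intro sum.cong refl) (auto simp: in_listset_iff EP_length EP_carr)

end


context gd begin

definition mlin :: "nat \<Rightarrow> (('g, 'm) matA list \<Rightarrow> complex) \<Rightarrow> bool" where
  "mlin N F \<longleftrightarrow> (\<forall>E j y z \<alpha> \<beta>. length E = N \<longrightarrow> set E \<subseteq> CA \<longrightarrow> j < N \<longrightarrow> y \<in> CA \<longrightarrow> z \<in> CA \<longrightarrow>
      F (E[j := aadd A (asc A \<alpha> y) (asc A \<beta> z)]) = \<alpha> * F (E[j := y]) + \<beta> * F (E[j := z]))"

definition invN :: "nat \<Rightarrow> (('g, 'm) matA list \<Rightarrow> complex) \<Rightarrow> bool" where
  "invN N G \<longleftrightarrow> (\<forall>q E. length E = N \<longrightarrow> set E \<subseteq> CA \<longrightarrow> G (map (actA act m q) E) = G E)"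

lemma mlinD: "mlin N F \<Longrightarrow> length E = N \<Longrightarrow> set E \<subseteq> CA \<Longrightarrow> j < N \<Longrightarrow> y \<in> CA \<Longrightarrow> z \<in> CA \<Longrightarrow>
      F (E[j := aadd A (asc A \<alpha> y) (asc A \<beta> z)]) = \<alpha> * F (E[j := y]) + \<beta> * F (E[j := z])"
  unfolding mlin_def by blast

lemma mlin_zero:
  assumes "mlin N F" "length E = N" "set E \<subseteq> CA" "j < N"
  shows "F (E[j := zA]) = 0"
proof -
  have "aadd A (asc A 0 zA) (asc A 0 zA) = zA" by (simp add: aaddA ascA)
  then show ?thesis using assms unfolding mlin_def
    by (metis zA_carr mult_zero_left add_0)
qed

lemma slot_zero:
  assumes "mlin N F" "length (Ea @ x # Eb) = N" "set Ea \<subseteq> CA" "set Eb \<subseteq> CA"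
  shows "F (Ea @ zA # Eb) = 0"
  using mlin_zero[OF assms(1), of "Ea @ zA # Eb" "length Ea"] assms by auto

lemma slot_lin:
  assumes "mlin N F" "length (Ea @ x # Eb) = N" "set Ea \<subseteq> CA" "set Eb \<subseteq> CA"
    and "a \<in> Sec h" "b \<in> Sec h"
  shows "F (Ea @ Eel act m p h (\<lambda>x. \<alpha> * a x + \<beta> * b x) # Eb)
     = \<alpha> * F (Ea @ Eel act m p h a # Eb) + \<beta> * F (Ea @ Eel act m p h b # Eb)"
proof -
  have "F ((Ea @ zA # Eb)[length Ea := aadd A (asc A \<alpha> (Eel act m p h a)) (asc A \<beta> (Eel act m p h b))])
     = \<alpha> * F ((Ea @ zA # Eb)[length Ea := Eel act m p h a]) + \<beta> * F ((Ea @ zA # Eb)[length Ea := Eel act m p h b])"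
    using assms by (intro mlinD[OF assms(1)]) (auto intro: Eel_carr)
  then show ?thesis by (simp add: Eel_lin)
qed

lemma Sec_sum: "finite S \<Longrightarrow> (\<forall>g\<in>S. \<phi> g \<in> Sec h) \<Longrightarrow> (\<lambda>x. \<Sum>g\<in>S. \<phi> g x) \<in> Sec h"
proof (induction S rule: finite_induct)
  case empty then show ?case by simp
next
  case (insert a S)
  then have "(\<lambda>x. 1 * \<phi> a x + 1 * (\<Sum>g\<in>S. \<phi> g x)) \<in> Sec h" by (intro Sec_lin) auto
  then show ?case using insert by simp
qed

lemma slot_sum:
  assumes "mlin N F" "length (Ea @ x # Eb) = N" "set Ea \<subseteq> CA" "set Eb \<subseteq> CA"
    and "finite S" "\<forall>g\<in>S. \<phi> g \<in> Sec h"
  shows "F (Ea @ Eel act m p h (\<lambda>x. \<Sum>g\<in>S. \<phi> g x) # Eb) = (\<Sum>g\<in>S. F (Ea @ Eel act m p h (\<phi> g) # Eb))"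
  using assms(5,6)
proof (induction S rule: finite_induct)
  case empty then show ?case using slot_zero[OF assms(1-4)] by simp
next
  case (insert a S)
  have s: "(\<lambda>x. \<Sum>g\<in>S. \<phi> g x) \<in> Sec h" using insert by (intro Sec_sum) auto
  have "F (Ea @ Eel act m p h (\<lambda>x. \<Sum>g\<in>insert a S. \<phi> g x) # Eb)
      = F (Ea @ Eel act m p h (\<lambda>x. 1 * \<phi> a x + 1 * (\<Sum>g\<in>S. \<phi> g x)) # Eb)"
    using insert by simp
  also have "\<dots> = F (Ea @ Eel act m p h (\<phi> a) # Eb) + F (Ea @ Eel act m p h (\<lambda>x. \<Sum>g\<in>S. \<phi> g x) # Eb)"
    using slot_lin[OF assms(1-4), of "\<phi> a" h "\<lambda>x. \<Sum>g\<in>S. \<phi> g x" p 1 1] insert s by simp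
  finally show ?case using insert by simp
qed

lemma suppB_iff: "g \<notin> suppB f \<longleftrightarrow> f g = (\<lambda>_. 0)" by (simp add: suppB_def)

lemma core_merge:
  assumes u: "u \<in> CB" and v: "v \<in> CB"
   and Ksum: "\<And>h (S::'g set) \<phi>. finite S \<Longrightarrow> (\<forall>g\<in>S. \<phi> g \<in> Sec h) \<Longrightarrow> K h (\<lambda>x. \<Sum>g\<in>S. \<phi> g x) = (\<Sum>g\<in>S. K h (\<phi> g))"
   and Kzero: "\<And>h. K h (\<lambda>_. 0) = 0"
  shows "(\<Sum>h\<in>suppB (amul B u v). K h (amul B u v h))
       = (\<Sum>g\<in>suppB u. \<Sum>g'\<in>suppB v. K (g + g') (\<lambda>x. m g g' x * u g x * v g' (act x g)))"
proof -
  let ?U = "suppB u" and ?V = "suppB v"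
  define H where "H = (\<lambda>(g, g'). g + g') ` (?U \<times> ?V)"
  have fU: "finite ?U" and fV: "finite ?V" using u v by (auto simp: acarrB)
  have fH: "finite H" unfolding H_def using fU fV by simp
  define t where "t h g = (\<lambda>x. m g (- g + h) x * u g x * v (- g + h) (act x g))" for h g
  have uvh: "amul B u v h = (\<lambda>x. \<Sum>g\<in>?U. t h g x)" for h by (simp add: amulB t_def)
  have tsec: "t h g \<in> Sec h" for h g
    using Sec_mul[of "u g" g "v (- g + h)" "- g + h"] u v unfolding t_def by (auto simp: acarrB add_minus_cancel)
  have tzero: "- g + h \<notin> ?V \<Longrightarrow> t h g = (\<lambda>_. 0)" for h g
    unfolding t_def suppB_iff by simp
  have supp_sub: "suppB (amul B u v) \<subseteq> H"
  proof
    fix h assume h: "h \<in> suppB (amul B u v)"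
    show "h \<in> H"
    proof (rule ccontr)
      assume nh: "h \<notin> H"
      have "- g + h \<notin> ?V" if "g \<in> ?U" for g
      proof
        assume "- g + h \<in> ?V"
        then have "(\<lambda>(g, g'). g + g') (g, - g + h) \<in> H" unfolding H_def using that by blast
        then show False using nh by (simp add: add_minus_cancel)
      qed
      then have "amul B u v h = (\<lambda>_. 0)" unfolding uvh using tzero by (simp add: fun_eq_iff)
      then show False using h by (simp add: suppB_def)
    qed
  qed
  have "(\<Sum>h\<in>suppB (amul B u v). K h (amul B u v h)) = (\<Sum>h\<in>H. K h (amul B u v h))"
    by (rule sum.mono_neutral_left[OF fH supp_sub]) (auto simp: suppB_def Kzero)
  also have "\<dots> = (\<Sum>h\<in>H. \<Sum>g\<in>?U. K h (t h g))"
    unfolding uvh using Ksum[OF fU] tsec by (intro sum.cong refl) blast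
  also have "\<dots> = (\<Sum>g\<in>?U. \<Sum>h\<in>H. K h (t h g))" by (rule sum.swap)
  also have "\<dots> = (\<Sum>g\<in>?U. \<Sum>g'\<in>?V. K (g + g') (\<lambda>x. m g g' x * u g x * v g' (act x g)))"
  proof (rule sum.cong[OF refl])
    fix g assume g: "g \<in> ?U"
    have sub: "(\<lambda>g'. g + g') ` ?V \<subseteq> H" unfolding H_def using g by auto
    have "(\<Sum>h\<in>H. K h (t h g)) = (\<Sum>h\<in>(\<lambda>g'. g + g') ` ?V. K h (t h g))"
    proof (rule sum.mono_neutral_right[OF fH sub])
      show "\<forall>h\<in>H - (\<lambda>g'. g + g') ` ?V. K h (t h g) = 0"
      proof
        fix h assume "h \<in> H - (\<lambda>g'. g + g') ` ?V"
        then have "- g + h \<notin> ?V" by (auto simp: image_iff)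
        then show "K h (t h g) = 0" using tzero Kzero by simp
      qed
    qed
    also have "\<dots> = (\<Sum>g'\<in>?V. K (g + g') (t (g + g') g))"
      by (subst sum.reindex) (auto simp: inj_on_def)
    also have "\<dots> = (\<Sum>g'\<in>?V. K (g + g') (\<lambda>x. m g g' x * u g x * v g' (act x g)))"
      by (simp add: t_def minus_add_cancel)
    finally show "(\<Sum>h\<in>H. K h (t h g)) = (\<Sum>g'\<in>?V. K (g + g') (\<lambda>x. m g g' x * u g x * v g' (act x g)))" .
  qed
  finally show ?thesis .
qed

lemma amulB_carr:
  assumes u: "u \<in> CB" and v: "v \<in> CB"
  shows "amul B u v \<in> CB"
proof -
  let ?U = "suppB u" and ?V = "suppB v"
  define H where "H = (\<lambda>(g, g'). g + g') ` (?U \<times> ?V)"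
  have fU: "finite ?U" and fV: "finite ?V" using u v by (auto simp: acarrB)
  have fH: "finite H" unfolding H_def using fU fV by simp
  define t where "t h g = (\<lambda>x. m g (- g + h) x * u g x * v (- g + h) (act x g))" for h g
  have uvh: "amul B u v h = (\<lambda>x. \<Sum>g\<in>?U. t h g x)" for h by (simp add: amulB t_def)
  have tsec: "t h g \<in> Sec h" for h g
    using Sec_mul[of "u g" g "v (- g + h)" "- g + h"] u v unfolding t_def by (auto simp: acarrB add_minus_cancel)
  have tzero: "- g + h \<notin> ?V \<Longrightarrow> t h g = (\<lambda>_. 0)" for h g
    unfolding t_def suppB_iff by simp
  have supp_sub: "suppB (amul B u v) \<subseteq> H"
  proof
    fix h assume h: "h \<in> suppB (amul B u v)"
    show "h \<in> H"
    proof (rule ccontr)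
      assume nh: "h \<notin> H"
      have "- g + h \<notin> ?V" if "g \<in> ?U" for g
      proof
        assume "- g + h \<in> ?V"
        then have "(\<lambda>(g, g'). g + g') (g, - g + h) \<in> H" unfolding H_def using that by blast
        then show False using nh by (simp add: add_minus_cancel)
      qed
      then have "amul B u v h = (\<lambda>_. 0)" unfolding uvh using tzero by (simp add: fun_eq_iff)
      then show False using h by (simp add: suppB_def)
    qed
  qed
  then have "finite (suppB (amul B u v))" using fH finite_subset by blast
  moreover have "amul B u v h \<in> Sec h" for h unfolding uvh using fU tsec by (intro Sec_sum) auto
  ultimately show ?thesis by (simp add: acarrB)
qed

lemma Phi_split:
  assumes "set pre \<subseteq> CB" "w \<in> CB" "set post \<subseteq> CB"
  shows "Phi act m F (pre @ w # post) = (\<Sum>a\<in>listset (map suppB pre). \<Sum>h\<in>suppB w. \<Sum>b\<in>listset (map suppB post).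
     if sum_list a + (h + sum_list b) = 0
     then F (EP act m 0 pre a @ Eel act m (sum_list a) h (w h) # EP act m (sum_list a + h) post b) else 0)"
proof -
  have fp: "\<forall>T\<in>set (map suppB pre). finite T" and fq: "\<forall>T\<in>set (map suppB post). finite T"
    and fw: "finite (suppB w)"
    using assms by (auto simp: acarrB)
  have "Phi act m F (pre @ w # post) = (\<Sum>a\<in>listset (map suppB pre). \<Sum>ys\<in>listset (suppB w # map suppB post).
     if sum_list (a @ ys) = 0 then F (EP act m 0 (pre @ w # post) (a @ ys)) else 0)"
    unfolding Phi_def map_append list.map(2) using fp fq fw by (subst sum_listset_append) auto
  also have "\<dots> = (\<Sum>a\<in>listset (map suppB pre). \<Sum>h\<in>suppB w. \<Sum>b\<in>listset (map suppB post).
     if sum_list (a @ h # b) = 0 then F (EP act m 0 (pre @ w # post) (a @ h # b)) else 0)"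
    using fq fw by (intro sum.cong refl) (simp add: sum_listset_Cons)
  also have "\<dots> = (\<Sum>a\<in>listset (map suppB pre). \<Sum>h\<in>suppB w. \<Sum>b\<in>listset (map suppB post).
     if sum_list a + (h + sum_list b) = 0
     then F (EP act m 0 pre a @ Eel act m (sum_list a) h (w h) # EP act m (sum_list a + h) post b) else 0)"
    by (intro sum.cong refl) (simp add: in_listset_iff EP_append)
  finally show ?thesis .
qed

lemma Phi_merge:
  assumes F: "mlin (Suc (length pre + length post)) F"
   and L: "set pre \<subseteq> CB" "set post \<subseteq> CB" "u \<in> CB" "v \<in> CB"
  shows "Phi act m F (pre @ amul B u v # post)
       = Phi act m (\<lambda>E. F (take (length pre) E @ amul A (E ! length pre) (E ! Suc (length pre))
                           # drop (Suc (Suc (length pre))) E)) (pre @ u # v # post)"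
proof -
  let ?j = "length pre"
  have fq: "\<forall>T\<in>set (map suppB post). finite T" and fv: "finite (suppB v)"
    using L by (auto simp: acarrB)
  define K where "K a b h \<phi> = (if sum_list a + (h + sum_list b) = 0
     then F (EP act m 0 pre a @ Eel act m (sum_list a) h \<phi> # EP act m (sum_list a + h) post b) else 0)" for a b h \<phi>
  have LHS: "Phi act m F (pre @ amul B u v # post) = (\<Sum>a\<in>listset (map suppB pre). \<Sum>h\<in>suppB (amul B u v).
      \<Sum>b\<in>listset (map suppB post). K a b h (amul B u v h))"
    unfolding K_def by (rule Phi_split) (use L amulB_carr in auto)
  have RHS: "Phi act m (\<lambda>E. F (take ?j E @ amul A (E ! ?j) (E ! Suc ?j) # drop (Suc (Suc ?j)) E)) (pre @ u # v # post)
     = (\<Sum>a\<in>listset (map suppB pre). \<Sum>g\<in>suppB u. \<Sum>g'\<in>suppB v. \<Sum>b\<in>listset (map suppB post).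
         K a b (g + g') (\<lambda>x. m g g' x * u g x * v g' (act x g)))"
  proof -
    have "Phi act m (\<lambda>E. F (take ?j E @ amul A (E ! ?j) (E ! Suc ?j) # drop (Suc (Suc ?j)) E)) (pre @ u # v # post)
      = (\<Sum>a\<in>listset (map suppB pre). \<Sum>g\<in>suppB u. \<Sum>b'\<in>listset (map suppB (v # post)).
     if sum_list a + (g + sum_list b') = 0
     then F (take ?j (EP act m 0 pre a @ Eel act m (sum_list a) g (u g) # EP act m (sum_list a + g) (v # post) b') @
         amul A ((EP act m 0 pre a @ Eel act m (sum_list a) g (u g) # EP act m (sum_list a + g) (v # post) b') ! ?j)
                ((EP act m 0 pre a @ Eel act m (sum_list a) g (u g) # EP act m (sum_list a + g) (v # post) b') ! Suc ?j)
       # drop (Suc (Suc ?j)) (EP act m 0 pre a @ Eel act m (sum_list a) g (u g) # EP act m (sum_list a + g) (v # post) b')) else 0)"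
      by (rule Phi_split) (use L in auto)
    also have "\<dots> = (\<Sum>a\<in>listset (map suppB pre). \<Sum>g\<in>suppB u. \<Sum>g'\<in>suppB v. \<Sum>b\<in>listset (map suppB post).
         K a b (g + g') (\<lambda>x. m g g' x * u g x * v g' (act x g)))"
    proof (intro sum.cong refl)
      fix a g assume a: "a \<in> listset (map suppB pre)"
      then have la: "length a = ?j" by (simp add: in_listset_iff)
      have le: "length (EP act m 0 pre a) = ?j" using la EP_length by blast
      show "(\<Sum>b'\<in>listset (map suppB (v # post)). if sum_list a + (g + sum_list b') = 0
     then F (take ?j (EP act m 0 pre a @ Eel act m (sum_list a) g (u g) # EP act m (sum_list a + g) (v # post) b') @
         amul A ((EP act m 0 pre a @ Eel act m (sum_list a) g (u g) # EP act m (sum_list a + g) (v # post) b') ! ?j)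
                ((EP act m 0 pre a @ Eel act m (sum_list a) g (u g) # EP act m (sum_list a + g) (v # post) b') ! Suc ?j)
       # drop (Suc (Suc ?j)) (EP act m 0 pre a @ Eel act m (sum_list a) g (u g) # EP act m (sum_list a + g) (v # post) b')) else 0)
        = (\<Sum>g'\<in>suppB v. \<Sum>b\<in>listset (map suppB post). K a b (g + g') (\<lambda>x. m g g' x * u g x * v g' (act x g)))"
        unfolding list.map(2)
        apply (subst sum_listset_Cons)
        using fq fv apply (simp, simp)
        apply (intro sum.cong refl)
        apply (simp add: K_def le nth_append amul_Eel add.assoc)
        done
    qed
    finally show ?thesis .
  qed
  show ?thesis unfolding LHS RHS
  proof (rule sum.cong[OF refl])
    fix a assume a: "a \<in> listset (map suppB pre)"
    then have la: "length a = ?j" by (simp add: in_listset_iff)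
    have Kab: "(\<Sum>h\<in>suppB (amul B u v). K a b h (amul B u v h))
        = (\<Sum>g\<in>suppB u. \<Sum>g'\<in>suppB v. K a b (g + g') (\<lambda>x. m g g' x * u g x * v g' (act x g)))"
      if b: "b \<in> listset (map suppB post)" for b
    proof (rule core_merge[OF L(3,4)])
      have lb: "length b = length post" using b by (simp add: in_listset_iff)
      have lens: "length (EP act m 0 pre a @ zA # EP act m (sum_list a + h) post b) = Suc (length pre + length post)" for h
        using la lb by (simp add: EP_length)
      have cs: "set (EP act m 0 pre a) \<subseteq> CA" "set (EP act m p post b) \<subseteq> CA" for p
        using L by (auto intro!: EP_carr)
      show "K a b h (\<lambda>x. \<Sum>g\<in>S. \<phi> g x) = (\<Sum>g\<in>S. K a b h (\<phi> g))"
        if "finite S" "\<forall>g\<in>S. \<phi> g \<in> Sec h" for h and S :: "'g set" and \<phi>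
        unfolding K_def using slot_sum[OF F lens cs that] by simp
      show "K a b h (\<lambda>_. 0) = 0" for h
        unfolding K_def using slot_zero[OF F lens cs] by simp
    qed
    show "(\<Sum>h\<in>suppB (amul B u v). \<Sum>b\<in>listset (map suppB post). K a b h (amul B u v h))
       = (\<Sum>g\<in>suppB u. \<Sum>g'\<in>suppB v. \<Sum>b\<in>listset (map suppB post). K a b (g + g') (\<lambda>x. m g g' x * u g x * v g' (act x g)))"
    proof -
      have "(\<Sum>h\<in>suppB (amul B u v). \<Sum>b\<in>listset (map suppB post). K a b h (amul B u v h))
         = (\<Sum>b\<in>listset (map suppB post). \<Sum>h\<in>suppB (amul B u v). K a b h (amul B u v h))"
        by (rule sum.swap)
      also have "\<dots> = (\<Sum>b\<in>listset (map suppB post). \<Sum>g\<in>suppB u. \<Sum>g'\<in>suppB v. K a b (g + g') (\<lambda>x. m g g' x * u g x * v g' (act x g)))"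
        by (rule sum.cong[OF refl]) (rule Kab)
      also have "\<dots> = (\<Sum>g\<in>suppB u. \<Sum>b\<in>listset (map suppB post). \<Sum>g'\<in>suppB v. K a b (g + g') (\<lambda>x. m g g' x * u g x * v g' (act x g)))"
        by (rule sum.swap)
      also have "\<dots> = (\<Sum>g\<in>suppB u. \<Sum>g'\<in>suppB v. \<Sum>b\<in>listset (map suppB post). K a b (g + g') (\<lambda>x. m g g' x * u g x * v g' (act x g)))"
        by (rule sum.cong[OF refl]) (rule sum.swap)
      finally show ?thesis .
    qed
  qed
qed

end


context gd begin

lemma Phi_cons:
  assumes "w \<in> CB" "set L \<subseteq> CB"
  shows "Phi act m F (w # L) = (\<Sum>h\<in>suppB w. \<Sum>b\<in>listset (map suppB L).
     if h + sum_list b = 0 then F (Eel act m 0 h (w h) # EP act m h L b) else 0)"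
proof -
  have "Phi act m F ([] @ w # L) = (\<Sum>a\<in>listset (map suppB ([]::('g,'m) elB list)). \<Sum>h\<in>suppB w. \<Sum>b\<in>listset (map suppB L).
     if sum_list a + (h + sum_list b) = 0
     then F (EP act m 0 [] a @ Eel act m (sum_list a) h (w h) # EP act m (sum_list a + h) L b) else 0)"
    by (rule Phi_split) (use assms in auto)
  then show ?thesis by (simp cong: if_cong)
qed

lemma supp_extend:
  assumes "finite W" "suppB f \<subseteq> W" "\<And>h. R h (\<lambda>_. 0) = 0"
  shows "(\<Sum>h\<in>suppB f. R h (f h)) = (\<Sum>h\<in>W. R h (f h))"
  by (rule sum.mono_neutral_left[OF assms(1,2)]) (auto simp: suppB_def assms(3))

lemma Phi_first_lin:
  assumes F: "mlin (Suc (length L)) F" and u: "u \<in> CB" and v: "v \<in> CB" and L: "set L \<subseteq> CB"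
  shows "Phi act m F (aadd B (asc B \<alpha> u) (asc B \<beta> v) # L) = \<alpha> * Phi act m F (u # L) + \<beta> * Phi act m F (v # L)"
proof -
  define w where "w = aadd B (asc B \<alpha> u) (asc B \<beta> v)"
  have wh: "w h = (\<lambda>x. \<alpha> * u h x + \<beta> * v h x)" for h by (simp add: w_def aaddB ascB)
  have uS: "u h \<in> Sec h" and vS: "v h \<in> Sec h" for h using u v by (auto simp: acarrB)
  have w: "w \<in> CB"
  proof -
    have "suppB w \<subseteq> suppB u \<union> suppB v" by (auto simp: suppB_def wh)
    then have "finite (suppB w)" using u v by (auto simp: acarrB intro: finite_subset)
    then show ?thesis using uS vS by (auto simp: acarrB wh intro!: Sec_lin)
  qed
  define R where "R h \<phi> = (\<Sum>b\<in>listset (map suppB L).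
     if h + sum_list b = 0 then F (Eel act m 0 h \<phi> # EP act m h L b) else 0)" for h \<phi>
  have lens: "length ([] @ zA # EP act m h L b) = Suc (length L)" if "b \<in> listset (map suppB L)" for h b
    using that by (simp add: in_listset_iff EP_length)
  have cs: "set ([]::('g,'m) matA list) \<subseteq> CA" "set (EP act m p L b) \<subseteq> CA" for p b
    using L by (auto intro!: EP_carr)
  have R0: "R h (\<lambda>_. 0) = 0" for h
    unfolding R_def using slot_zero[OF F lens cs] by (intro sum.neutral) simp
  have Rlin: "R h (w h) = \<alpha> * R h (u h) + \<beta> * R h (v h)" for h
    unfolding R_def wh sum_distrib_left sum.distrib[symmetric]
    using slot_lin[OF F lens cs uS vS] by (intro sum.cong refl) simp
  define W where "W = suppB u \<union> suppB v"
  have fW: "finite W" using u v by (auto simp: W_def acarrB)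
  have sw: "suppB w \<subseteq> W" by (auto simp: suppB_def wh W_def)
  have "Phi act m F (w # L) = (\<Sum>h\<in>W. R h (w h))"
    unfolding Phi_cons[OF w L] R_def[symmetric] by (rule supp_extend[of W w R, OF fW sw R0])
  also have "\<dots> = \<alpha> * (\<Sum>h\<in>W. R h (u h)) + \<beta> * (\<Sum>h\<in>W. R h (v h))"
    by (simp add: Rlin sum.distrib sum_distrib_left)
  also have "\<dots> = \<alpha> * Phi act m F (u # L) + \<beta> * Phi act m F (v # L)"
    unfolding Phi_cons[OF u L] Phi_cons[OF v L] R_def[symmetric]
    using supp_extend[of W u R, OF fW _ R0] supp_extend[of W v R, OF fW _ R0] by (auto simp: W_def)
  finally show ?thesis unfolding w_def .
qed

lemma add_eq_0_comm: "(a::'g) + b = 0 \<longleftrightarrow> b + a = 0"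
  by (metis eq_neg_iff_add_eq_0 neg_eq_iff_add_eq_0)

lemma Phi_rot1:
  assumes G: "invN (length L) G" and L: "set L \<subseteq> CB"
  shows "Phi act m G (rotate1 L) = Phi act m (\<lambda>E. G (rotate1 E)) L"
proof (cases L)
  case Nil then show ?thesis by (simp add: Phi_def listset.simps(1))
next
  case (Cons x L0)
  have x: "x \<in> CB" and L0: "set L0 \<subseteq> CB" using L Cons by auto
  have xS: "x h \<in> Sec h" for h using x by (auto simp: acarrB)
  have "Phi act m G (rotate1 L) = (\<Sum>a\<in>listset (map suppB L0). \<Sum>h\<in>suppB x.
      if sum_list a + h = 0 then G (EP act m 0 L0 a @ [Eel act m (sum_list a) h (x h)]) else 0)"
    using Phi_split[of L0 x "[]" G] Cons x L0 by (simp cong: if_cong)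
  also have "\<dots> = (\<Sum>h\<in>suppB x. \<Sum>a\<in>listset (map suppB L0).
      if sum_list a + h = 0 then G (EP act m 0 L0 a @ [Eel act m (sum_list a) h (x h)]) else 0)"
    by (rule sum.swap)
  also have "\<dots> = (\<Sum>h\<in>suppB x. \<Sum>a\<in>listset (map suppB L0).
      if h + sum_list a = 0 then G (rotate1 (Eel act m 0 h (x h) # EP act m h L0 a)) else 0)"
  proof (intro sum.cong refl)
    fix h a assume a: "a \<in> listset (map suppB L0)"
    have la: "length a = length L0" using a by (simp add: in_listset_iff)
    show "(if sum_list a + h = 0 then G (EP act m 0 L0 a @ [Eel act m (sum_list a) h (x h)]) else 0)
        = (if h + sum_list a = 0 then G (rotate1 (Eel act m 0 h (x h) # EP act m h L0 a)) else 0)"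
    proof (cases "sum_list a + h = 0")
      case True
      then have sa: "sum_list a = - h" by (simp add: eq_neg_iff_add_eq_0)
      have e1: "EP act m h L0 a = map (actA act m h) (EP act m 0 L0 a)"
        using EP_act[of h 0 L0 a] by simp
      have e2: "Eel act m 0 h (x h) = actA act m h (Eel act m (- h) h (x h))"
        by (simp add: actA_Eel)
      have Gi: "\<And>q E. length E = length L \<Longrightarrow> set E \<subseteq> CA \<Longrightarrow> G (map (actA act m q) E) = G E"
        using G unfolding invN_def by blast
      have "G (map (actA act m h) (EP act m 0 L0 a @ [Eel act m (- h) h (x h)]))
          = G (EP act m 0 L0 a @ [Eel act m (- h) h (x h)])"
        by (rule Gi) (use L0 la xS Cons in \<open>auto simp: EP_length intro!: EP_carr[THEN subsetD] Eel_carr\<close>)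
      then show ?thesis using True add_eq_0_comm[of "sum_list a" h] by (simp add: sa e1 e2)
    next
      case False then show ?thesis using add_eq_0_comm[of "sum_list a" h] by simp
    qed
  qed
  also have "\<dots> = Phi act m (\<lambda>E. G (rotate1 E)) L"
    unfolding Cons using Phi_cons[OF x L0, of "\<lambda>E. G (rotate1 E)"] by simp
  finally show ?thesis .
qed

lemma invN_rot1: "invN N G \<Longrightarrow> invN N (\<lambda>E. G (rotate1 E))"
  unfolding invN_def
proof (intro allI impI)
  fix q E assume G: "\<forall>q E. length E = N \<longrightarrow> set E \<subseteq> CA \<longrightarrow> G (map (actA act m q) E) = G E"
    and E: "length (E::('g,'m) matA list) = N" "set E \<subseteq> CA"
  show "G (rotate1 (map (actA act m q) E)) = G (rotate1 E)"
    unfolding rotate1_map using G E by simp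
qed

lemma Phi_rot:
  assumes G: "invN (length L) G" and L: "set L \<subseteq> CB"
  shows "Phi act m G (rotate k L) = Phi act m (\<lambda>E. G (rotate k E)) L"
  using G
proof (induction k arbitrary: G)
  case 0 then show ?case by simp
next
  case (Suc k)
  have "Phi act m G (rotate (Suc k) L) = Phi act m G (rotate1 (rotate k L))" by simp
  also have "\<dots> = Phi act m (\<lambda>E. G (rotate1 E)) (rotate k L)"
    using Phi_rot1[of "rotate k L" G] Suc.prems L by simp
  also have "\<dots> = Phi act m (\<lambda>E. G (rotate1 (rotate k E))) L"
    using Suc.IH[of "\<lambda>E. G (rotate1 E)"] invN_rot1[OF Suc.prems] by simp
  finally show ?case by simp
qed

end


context gd begin

lemma cochain_on1: "cochain_on A n c \<Longrightarrow> a \<in> CA \<Longrightarrow> a' \<in> CA \<Longrightarrow> length as = n \<Longrightarrow> set as \<subseteq> CA \<Longrightarrow>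
        c (\<alpha> * l + \<beta> * l', aadd A (asc A \<alpha> a) (asc A \<beta> a')) as = \<alpha> * c (l, a) as + \<beta> * c (l', a') as"
  unfolding cochain_on_def by blast

lemma cochain_on2: "cochain_on A n c \<Longrightarrow> cochain_args A n x0 as \<Longrightarrow> i < n \<Longrightarrow> y \<in> CA \<Longrightarrow> z \<in> CA \<Longrightarrow>
        c x0 (as[i := aadd A (asc A \<alpha> y) (asc A \<beta> z)]) = \<alpha> * c x0 (as[i := y]) + \<beta> * c x0 (as[i := z])"
  unfolding cochain_on_def by blast

lemma mlin_F0: assumes c: "cochain_on A n c" shows "mlin (Suc n) (\<lambda>E. c (0, hd E) (tl E))"
  unfolding mlin_def
proof (intro allI impI)
  fix E :: "('g,'m) matA list" and j y z \<alpha> \<beta>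
  assume E: "length E = Suc n" "set E \<subseteq> CA" and j: "j < Suc n" and y: "y \<in> CA" and z: "z \<in> CA"
  obtain e0 es where Ee: "E = e0 # es" using E by (cases E) auto
  have les: "length es = n" and ses: "set es \<subseteq> CA" and e0: "e0 \<in> CA" using E Ee by auto
  show "c (0, hd (E[j := aadd A (asc A \<alpha> y) (asc A \<beta> z)])) (tl (E[j := aadd A (asc A \<alpha> y) (asc A \<beta> z)]))
      = \<alpha> * c (0, hd (E[j := y])) (tl (E[j := y])) + \<beta> * c (0, hd (E[j := z])) (tl (E[j := z]))"
  proof (cases j)
    case 0
    then show ?thesis using cochain_on1[OF c y z les ses, of \<alpha> 0 \<beta> 0] by (simp add: Ee)
  next
    case (Suc j')
    have "cochain_args A n (0, e0) es" using e0 les ses by (simp add: cochain_args_def)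
    then show ?thesis using cochain_on2[OF c _ _ y z, of "(0, e0)" es j' \<alpha> \<beta>] Suc j by (simp add: Ee)
  qed
qed

lemma mlin_F1: assumes c: "cochain_on A n c" shows "mlin n (\<lambda>E. c (1, zA) E)"
  unfolding mlin_def
proof (intro allI impI)
  fix E :: "('g,'m) matA list" and j y z \<alpha> \<beta>
  assume E: "length E = n" "set E \<subseteq> CA" and j: "j < n" and y: "y \<in> CA" and z: "z \<in> CA"
  have "cochain_args A n (1, zA) E" using E by (simp add: cochain_args_def)
  then show "c (1, zA) (E[j := aadd A (asc A \<alpha> y) (asc A \<beta> z)]) = \<alpha> * c (1, zA) (E[j := y]) + \<beta> * c (1, zA) (E[j := z])"
    using cochain_on2[OF c _ j y z] by simp
qed

lemma invD: "invariant_cochain act m HomSec n c \<Longrightarrow> a0 \<in> CA \<Longrightarrow> length as = n \<Longrightarrow> set as \<subseteq> CA \<Longrightarrow>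
   c (l, actA act m q a0) (map (actA act m q) as) = c (l, a0) as"
  unfolding invariant_cochain_def cochain_args_def by auto

lemma actA_zero[simp]: "actA act m q zA = zA" by (simp add: actA_def fun_eq_iff)

lemma invN_F0: assumes "invariant_cochain act m HomSec n c" shows "invN (Suc n) (\<lambda>E. c (0, hd E) (tl E))"
  unfolding invN_def
proof (intro allI impI)
  fix q and E :: "('g,'m) matA list" assume E: "length E = Suc n" "set E \<subseteq> CA"
  then obtain e0 es where Ee: "E = e0 # es" by (cases E) auto
  show "c (0, hd (map (actA act m q) E)) (tl (map (actA act m q) E)) = c (0, hd E) (tl E)"
    using invD[OF assms, of e0 es 0 q] E Ee by simp
qed

lemma invN_F1: assumes "invariant_cochain act m HomSec n c" shows "invN n (\<lambda>E. c (1, zA) E)"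
  unfolding invN_def using invD[OF assms, of zA] by simp

lemma invN_F0m: assumes "invariant_cochain act m HomSec n c"
  shows "invN (Suc (Suc n)) (\<lambda>E. c (0, amul A (E ! 0) (E ! 1)) (drop 2 E))"
  unfolding invN_def
proof (intro allI impI)
  fix q and E :: "('g,'m) matA list" assume E: "length E = Suc (Suc n)" "set E \<subseteq> CA"
  then obtain e0 e1 es where Ee: "E = e0 # e1 # es" by (metis length_Suc_conv)
  have e: "e0 \<in> CA" "e1 \<in> CA" "set es \<subseteq> CA" "length es = n" using E Ee by auto
  show "c (0, amul A (map (actA act m q) E ! 0) (map (actA act m q) E ! 1)) (drop 2 (map (actA act m q) E))
      = c (0, amul A (E ! 0) (E ! 1)) (drop 2 E)"
    using invD[OF assms amul_carr[OF e(1,2)] e(4,3), of 0 q] by (simp add: Ee actA_amul)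
qed

lemma psi2_sum: "psi2 act m (\<lambda>x0 as. \<Sum>i\<in>I. C i x0 as) x0 fs = (\<Sum>i\<in>I. psi2 act m (C i) x0 fs)"
  by (cases x0) (simp add: psi2_def sum.distrib sum_distrib_left sum.swap[of _ I])

lemma Phi_scale: "Phi act m (\<lambda>E. s * F E) L = s * Phi act m F L"
  by (simp add: Phi_def sum_distrib_left if_distrib cong: if_cong)

lemma Phi_zero: "Phi act m (\<lambda>E. 0) L = 0"
  by (simp add: Phi_def)

end


context gd begin

lemma linB_carr: assumes u: "u \<in> CB" and v: "v \<in> CB" shows "aadd B (asc B \<alpha> u) (asc B \<beta> v) \<in> CB"
proof -
  define w where "w = aadd B (asc B \<alpha> u) (asc B \<beta> v)"
  have wh: "w h = (\<lambda>x. \<alpha> * u h x + \<beta> * v h x)" for h by (simp add: w_def aaddB ascB)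
  have uS: "u h \<in> Sec h" and vS: "v h \<in> Sec h" for h using u v by (auto simp: acarrB)
  have "suppB w \<subseteq> suppB u \<union> suppB v" by (auto simp: suppB_def wh)
  then have "finite (suppB w)" using u v by (auto simp: acarrB intro: finite_subset)
  then show ?thesis using uS vS unfolding w_def[symmetric] by (auto simp: acarrB wh intro!: Sec_lin)
qed

lemma aadd_asc0: "aadd A (asc A 0 y) x = x" by (simp add: aaddA ascA)
lemma aadd_asc1: "aadd A (asc A 1 y) zA = y" by (simp add: aaddA ascA)
lemma ascB1: "asc B 1 x = x" by (simp add: ascB)

lemma d0:
  assumes c: "cochain_on A n c" and f0: "f0 \<in> CB" and fs: "length fs = Suc n" "set fs \<subseteq> CB"
  shows "psi2 act m (dface A n 0 c) (l, f0) fs = dface B n 0 (psi2 act m c) (l, f0) fs"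
proof -
  obtain f1 fs1 where fe: "fs = f1 # fs1" using fs by (cases fs) auto
  have f1: "f1 \<in> CB" and fs1: "set fs1 \<subseteq> CB" "length fs1 = n" using fs fe by auto
  define P0 where "P0 = (\<lambda>E. c (0, hd E) (tl E))"
  have m0: "mlin (Suc (length ([]::('g,'m) elB list) + length fs1)) P0" using mlin_F0[OF c] fs1 by (simp add: P0_def)
  have M: "Phi act m P0 (amul B f0 f1 # fs1) = Phi act m (\<lambda>E. P0 (amul A (E ! 0) (E ! Suc 0) # drop (Suc (Suc 0)) E)) (f0 # f1 # fs1)"
    using Phi_merge[OF m0, of f0 f1] f0 f1 fs1 by simp
  have e1: "Phi act m (\<lambda>E. dface A n 0 c (0, hd E) (tl E)) (f0 # f1 # fs1) = Phi act m P0 (amul B f0 f1 # fs1)"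
    unfolding M
  proof (rule Phi_cong)
    fix E :: "('g,'m) matA list" assume "length E = length (f0 # f1 # fs1)"
    then obtain e0 e1 es where "E = e0 # e1 # es" by (metis length_Suc_conv)
    then show "dface A n 0 c (0, hd E) (tl E) = P0 (amul A (E ! 0) (E ! Suc 0) # drop (Suc (Suc 0)) E)"
      by (simp add: dface_def P0_def aadd_asc0)
  qed (use f0 f1 fs1 in auto)
  have e2: "Phi act m (\<lambda>E. dface A n 0 c (1, zA) E) (f1 # fs1) = Phi act m P0 (f1 # fs1)"
  proof (rule Phi_cong)
    fix E :: "('g,'m) matA list" assume "length E = length (f1 # fs1)"
    then obtain e es where "E = e # es" by (metis length_Suc_conv)
    then show "dface A n 0 c (1, zA) E = P0 E" by (simp add: dface_def P0_def aadd_asc1)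
  qed (use f1 fs1 in auto)
  have w: "aadd B (asc B l f1) (amul B f0 f1) \<in> CB"
    using linB_carr[OF f1 amulB_carr[OF f0 f1], of l 1] by (simp add: ascB1)
  have "dface B n 0 (psi2 act m c) (l, f0) fs = psi2 act m c (0, aadd B (asc B l f1) (amul B f0 f1)) fs1"
    by (simp add: dface_def fe)
  also have "\<dots> = Phi act m P0 (aadd B (asc B l f1) (asc B 1 (amul B f0 f1)) # fs1)"
    using psi2_Phi[OF w fs1(1)] by (simp add: P0_def ascB1)
  also have "\<dots> = l * Phi act m P0 (f1 # fs1) + Phi act m P0 (amul B f0 f1 # fs1)"
    using Phi_first_lin[of fs1 P0 f1 "amul B f0 f1" l 1] mlin_F0[OF c] fs1 f1 amulB_carr[OF f0 f1]
    by (simp add: P0_def)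
  finally show ?thesis
    using psi2_Phi[OF f0 fs(2), of "dface A n 0 c" l] e1 e2 by (simp add: fe P0_def)
qed

lemma dmid:
  assumes c: "cochain_on A n c" and f0: "f0 \<in> CB" and fs: "length fs = Suc n" "set fs \<subseteq> CB"
    and i: "i = Suc j" "i \<le> n"
  shows "psi2 act m (dface A n i c) (l, f0) fs = dface B n i (psi2 act m c) (l, f0) fs"
proof -
  define P0 where "P0 = (\<lambda>E. c (0, hd E) (tl E))"
  define P1 where "P1 = (\<lambda>E. c (1, zA) E)"
  define u where "u = fs ! j"
  define v where "v = fs ! Suc j"
  define pre where "pre = take j fs"
  define post where "post = drop (Suc (Suc j)) fs"
  have fsd: "fs = pre @ u # v # post"
  proof -
    have "fs = take j fs @ fs ! j # drop (Suc j) fs" using i fs by (simp add: id_take_nth_drop)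
    moreover have "drop (Suc j) fs = fs ! Suc j # drop (Suc (Suc j)) fs" using i fs by (simp add: Cons_nth_drop_Suc)
    ultimately show ?thesis by (simp add: pre_def u_def v_def post_def)
  qed
  have lpre: "length pre = j" using i fs by (simp add: pre_def)
  have lpost: "length post = n - Suc j" using i fs by (simp add: post_def)
  have cs: "set pre \<subseteq> CB" "u \<in> CB" "v \<in> CB" "set post \<subseteq> CB" using fs(2) unfolding fsd by auto
  have uv: "amul B u v \<in> CB" using amulB_carr cs by blast
  have merged: "dface B n i (psi2 act m c) (l, f0) fs = psi2 act m c (l, f0) (pre @ amul B u v # post)"
    using i fs by (simp add: dface_def pre_def u_def v_def post_def)
  have m0: "mlin (Suc (length (f0 # pre) + length post)) P0"
    using mlin_F0[OF c] lpre lpost i by (simp add: P0_def)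
  have m1: "mlin (Suc (length pre + length post)) P1"
    using mlin_F1[OF c] lpre lpost i by (simp add: P1_def)
  have M0: "Phi act m P0 ((f0 # pre) @ amul B u v # post)
      = Phi act m (\<lambda>E. P0 (take (Suc j) E @ amul A (E ! Suc j) (E ! Suc (Suc j)) # drop (Suc (Suc (Suc j))) E)) (f0 # fs)"
    using Phi_merge[OF m0] cs f0 lpre by (simp add: fsd)
  have M1: "Phi act m P1 (pre @ amul B u v # post)
      = Phi act m (\<lambda>E. P1 (take j E @ amul A (E ! j) (E ! Suc j) # drop (Suc (Suc j)) E)) fs"
    using Phi_merge[OF m1] cs lpre by (simp add: fsd)
  have e0: "Phi act m (\<lambda>E. dface A n i c (0, hd E) (tl E)) (f0 # fs)
      = Phi act m (\<lambda>E. P0 (take (Suc j) E @ amul A (E ! Suc j) (E ! Suc (Suc j)) # drop (Suc (Suc (Suc j))) E)) (f0 # fs)"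
  proof (rule Phi_cong)
    fix E :: "('g,'m) matA list" assume "length E = length (f0 # fs)"
    then obtain e0 es where "E = e0 # es" by (metis length_Suc_conv)
    then show "dface A n i c (0, hd E) (tl E) = P0 (take (Suc j) E @ amul A (E ! Suc j) (E ! Suc (Suc j)) # drop (Suc (Suc (Suc j))) E)"
      using i by (simp add: dface_def P0_def)
  qed (use f0 fs in auto)
  have e1: "Phi act m (\<lambda>E. dface A n i c (1, zA) E) fs
      = Phi act m (\<lambda>E. P1 (take j E @ amul A (E ! j) (E ! Suc j) # drop (Suc (Suc j)) E)) fs"
  proof (rule Phi_cong)
    fix E :: "('g,'m) matA list" assume "length E = length fs"
    then show "dface A n i c (1, zA) E = P1 (take j E @ amul A (E ! j) (E ! Suc j) # drop (Suc (Suc j)) E)"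
      using i by (simp add: dface_def P1_def)
  qed (use fs in auto)
  have p2: "psi2 act m c (l, f0) (pre @ amul B u v # post)
     = Phi act m P0 ((f0 # pre) @ amul B u v # post) + l * Phi act m P1 (pre @ amul B u v # post)"
    using psi2_Phi[OF f0, of "pre @ amul B u v # post" c l] cs uv by (simp add: P0_def P1_def)
  show ?thesis
    unfolding merged psi2_Phi[OF f0 fs(2)] p2 M0 M1
    using e0 e1 by (simp add: P0_def P1_def)
qed

lemma rot_last: "length xs = k \<Longrightarrow> rotate k (xs @ [x]) = x # xs"
  using rotate_append[of xs "[x]"] by simp

lemma dlast:
  assumes c: "cochain_on A n c" and inv: "invariant_cochain act m HomSec n c"
    and f0: "f0 \<in> CB" and fs: "length fs = Suc n" "set fs \<subseteq> CB"
  shows "psi2 act m (dface A n (Suc n) c) (l, f0) fs = dface B n (Suc n) (psi2 act m c) (l, f0) fs"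
proof -
  define P0 where "P0 = (\<lambda>E. c (0, hd E) (tl E))"
  define P0m where "P0m = (\<lambda>E. c (0, amul A (E ! 0) (E ! 1)) (drop 2 E))"
  obtain fs' fn where fsd: "fs = fs' @ [fn]" using fs by (metis length_Suc_conv rev_exhaust list.distinct(1))
  have lfs': "length fs' = n" using fs fsd by simp
  have fn: "fn \<in> CB" and fs': "set fs' \<subseteq> CB" using fs fsd by auto
  have fnn: "fs ! n = fn" "take n fs = fs'" using fsd lfs' by auto
  have w: "aadd B (asc B l fn) (amul B fn f0) \<in> CB"
    using linB_carr[OF fn amulB_carr[OF fn f0], of l 1] by (simp add: ascB1)
  have "dface B n (Suc n) (psi2 act m c) (l, f0) fs = psi2 act m c (0, aadd B (asc B l fn) (amul B fn f0)) fs'"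
    by (simp add: dface_def fnn)
  also have "\<dots> = Phi act m P0 (aadd B (asc B l fn) (asc B 1 (amul B fn f0)) # fs')"
    using psi2_Phi[OF w fs'] by (simp add: P0_def ascB1)
  also have "\<dots> = l * Phi act m P0 (fn # fs') + Phi act m P0 (amul B fn f0 # fs')"
    using Phi_first_lin[of fs' P0 fn "amul B fn f0" l 1] mlin_F0[OF c] fs' fn lfs' amulB_carr[OF fn f0]
    by (simp add: P0_def)
  finally have R: "dface B n (Suc n) (psi2 act m c) (l, f0) fs = l * Phi act m P0 (fn # fs') + Phi act m P0 (amul B fn f0 # fs')" .
  have X1: "Phi act m P0 (fn # fs') = Phi act m (\<lambda>E. P0 (rotate n E)) fs"
  proof -
    have "Phi act m P0 (fn # fs') = Phi act m P0 (rotate n fs)" using rot_last[OF lfs'] fsd by simp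
    also have "\<dots> = Phi act m (\<lambda>E. P0 (rotate n E)) fs"
      by (rule Phi_rot) (use invN_F0[OF inv] fs in \<open>auto simp: P0_def\<close>)
    finally show ?thesis .
  qed
  have m0: "mlin (Suc (length ([]::('g,'m) elB list) + length fs')) P0" using mlin_F0[OF c] lfs' by (simp add: P0_def)
  have X2: "Phi act m P0 (amul B fn f0 # fs') = Phi act m (\<lambda>E. P0m (rotate (Suc n) E)) (f0 # fs)"
  proof -
    have "Phi act m P0 (amul B fn f0 # fs') = Phi act m (\<lambda>E. P0 (amul A (E ! 0) (E ! Suc 0) # drop (Suc (Suc 0)) E)) (fn # f0 # fs')"
      using Phi_merge[OF m0, of fn f0] fn f0 fs' by simp
    also have "\<dots> = Phi act m P0m (fn # f0 # fs')"
    proof (rule Phi_cong)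
      fix E :: "('g,'m) matA list" assume "length E = length (fn # f0 # fs')"
      then obtain e0 e1 es where "E = e0 # e1 # es" by (metis length_Suc_conv)
      then show "P0 (amul A (E ! 0) (E ! Suc 0) # drop (Suc (Suc 0)) E) = P0m E"
        by (simp add: P0_def P0m_def)
    qed (use fn f0 fs' in auto)
    also have "fn # f0 # fs' = rotate (Suc n) (f0 # fs)"
      using rot_last[of "f0 # fs'" "Suc n" fn] lfs' fsd by simp
    also have "Phi act m P0m (rotate (Suc n) (f0 # fs)) = Phi act m (\<lambda>E. P0m (rotate (Suc n) E)) (f0 # fs)"
      by (rule Phi_rot) (use invN_F0m[OF inv] fs f0 in \<open>auto simp: P0m_def\<close>)
    finally show ?thesis .
  qed
  have Y1: "Phi act m (\<lambda>E. dface A n (Suc n) c (1, zA) E) fs = Phi act m (\<lambda>E. P0 (rotate n E)) fs"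
  proof (rule Phi_cong)
    fix E :: "('g,'m) matA list" assume lE: "length E = length fs"
    then obtain es x where Ee: "E = es @ [x]" using fs by (metis length_Suc_conv rev_exhaust list.distinct(1))
    have les: "length es = n" using lE Ee fs by simp
    show "dface A n (Suc n) c (1, zA) E = P0 (rotate n E)"
      using les by (simp add: Ee dface_def P0_def rot_last aadd_asc1 nth_append)
  qed (use fs in auto)
  have Y0: "Phi act m (\<lambda>E. dface A n (Suc n) c (0, hd E) (tl E)) (f0 # fs) = Phi act m (\<lambda>E. P0m (rotate (Suc n) E)) (f0 # fs)"
  proof (rule Phi_cong)
    fix E :: "('g,'m) matA list" assume lE: "length E = length (f0 # fs)"
    then obtain e0 es' x where Ee: "E = e0 # es' @ [x]" using fs
      by (metis length_Suc_conv rev_exhaust list.distinct(1))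
    have les: "length es' = n" using lE Ee fs by simp
    have r: "rotate (Suc n) E = x # e0 # es'" using rot_last[of "e0 # es'" "Suc n" x] les Ee by simp
    show "dface A n (Suc n) c (0, hd E) (tl E) = P0m (rotate (Suc n) E)"
      unfolding r using les by (simp add: Ee dface_def P0m_def aadd_asc0 nth_append)
  qed (use f0 fs in auto)
  show ?thesis
    unfolding R psi2_Phi[OF f0 fs(2)] X1 X2 Y0 Y1 by (simp add: P0_def)
qed

lemma sbar_rot:
  assumes "i \<le> n" "length as = n"
  shows "sbar R n i f (l, a0) as = (-1) ^ (n * i) * f (1, azero R) (rotate i (a0 # as))"
proof (cases i)
  case 0 then show ?thesis by (simp add: sbar_def)
next
  case (Suc j)
  have "rotate i (a0 # as) = drop i (a0 # as) @ take i (a0 # as)"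
    using assms by (simp add: rotate_drop_take)
  then show ?thesis using Suc by (simp add: sbar_def)
qed

lemma zB_carr: "(\<lambda>g x. 0) \<in> CB" by (simp add: acarrB suppB_def)

lemma Phi_zB: "Phi act m F ((\<lambda>g x. 0) # L) = 0"
  by (simp add: Phi_def listset.simps(2) set_Cons_def suppB_def)

lemma sb:
  assumes c: "cochain_on A (Suc n) c" and inv: "invariant_cochain act m HomSec (Suc n) c"
    and f0: "f0 \<in> CB" and fs: "length fs = n" "set fs \<subseteq> CB" and i: "i \<le> n"
  shows "psi2 act m (sbar A n i c) (l, f0) fs = sbar B n i (psi2 act m c) (l, f0) fs"
proof -
  define P1 where "P1 = (\<lambda>E. c (1, zA) E)"
  define s where "s = ((-1) ^ (n * i) :: complex)"
  have rc: "set (rotate i (f0 # fs)) \<subseteq> CB" using f0 fs by simp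
  have R: "sbar B n i (psi2 act m c) (l, f0) fs = s * Phi act m (\<lambda>E. P1 (rotate i E)) (f0 # fs)"
  proof -
    have "sbar B n i (psi2 act m c) (l, f0) fs = s * psi2 act m c (1, (\<lambda>g x. 0)) (rotate i (f0 # fs))"
      using sbar_rot[OF i fs(1)] by (simp add: s_def azeroB)
    also have "\<dots> = s * Phi act m P1 (rotate i (f0 # fs))"
      using psi2_Phi[OF zB_carr rc] by (simp add: Phi_zB P1_def)
    also have "\<dots> = s * Phi act m (\<lambda>E. P1 (rotate i E)) (f0 # fs)"
      using Phi_rot[of "f0 # fs" P1 i] invN_F1[OF inv] fs f0 by (simp add: P1_def)
    finally show ?thesis .
  qed
  have L0: "Phi act m (\<lambda>E. sbar A n i c (0, hd E) (tl E)) (f0 # fs) = Phi act m (\<lambda>E. s * P1 (rotate i E)) (f0 # fs)"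
  proof (rule Phi_cong)
    fix E :: "('g,'m) matA list" assume lE: "length E = length (f0 # fs)"
    then obtain e0 es where Ee: "E = e0 # es" by (metis length_Suc_conv)
    show "sbar A n i c (0, hd E) (tl E) = s * P1 (rotate i E)"
      using sbar_rot[OF i, of es A c 0 e0] lE fs Ee by (simp add: s_def P1_def azeroA)
  qed (use f0 fs in auto)
  have L1: "Phi act m (\<lambda>E. sbar A n i c (1, zA) E) fs = Phi act m (\<lambda>E. 0) fs"
  proof (rule Phi_cong)
    fix E :: "('g,'m) matA list" assume lE: "length E = length fs" and sE: "set E \<subseteq> CA"
    have m1: "mlin (Suc n) P1" using mlin_F1[OF c] by (simp add: P1_def)
    show "sbar A n i c (1, zA) E = 0"
    proof (cases i)
      case 0
      have "P1 ((zA # E)[0 := zA]) = 0" by (rule mlin_zero[OF m1]) (use lE fs sE in auto)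
      then show ?thesis using 0 by (simp add: sbar_def azeroA P1_def)
    next
      case (Suc j)
      have "P1 ((drop j E @ zA # take j E)[length (drop j E) := zA]) = 0"
        by (rule mlin_zero[OF m1]) (use lE fs sE i Suc in \<open>auto dest: in_set_dropD in_set_takeD\<close>)
      then show ?thesis using Suc by (simp only: list_update_length) (simp add: sbar_def azeroA P1_def)
    qed
  qed (use fs in auto)
  show ?thesis
    unfolding psi2_Phi[OF f0 fs(2)] R L0 L1 Phi_scale Phi_zero by (simp add: P1_def)
qed

end


theorem theorem5:
  fixes act :: "'m \<Rightarrow> 'g::group_add \<Rightarrow> 'm"
    and m :: "'g \<Rightarrow> 'g \<Rightarrow> 'm \<Rightarrow> complex"
    and Sec :: "'g \<Rightarrow> ('m \<Rightarrow> complex) set"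
    and HomSec :: "'g \<Rightarrow> 'g \<Rightarrow> ('m \<Rightarrow> complex) set"
    and n :: nat
  assumes "gerbe_datum act m Sec HomSec"
  shows
    \<comment> \<open>Psi_2 d^i = d^i Psi_2 on CC^n(A)^Gamma, 0 \<le> i \<le> n+1\<close>
    "(\<forall>c. cochain_on (algA HomSec) n c \<and> invariant_cochain act m HomSec n c \<longrightarrow>
        (\<forall>i\<le>Suc n. \<forall>x0 fs. cochain_args (algB act m Sec) (Suc n) x0 fs \<longrightarrow>
           psi2 act m (dface (algA HomSec) n i c) x0 fs
             = dface (algB act m Sec) n i (psi2 act m c) x0 fs))
   \<and> \<comment> \<open>Psi_2 sbar^i = sbar^i Psi_2 on CC^(n+1)(A)^Gamma, 0 \<le> i \<le> n\<close>
     (\<forall>c. cochain_on (algA HomSec) (Suc n) c \<and> invariant_cochain act m HomSec (Suc n) c \<longrightarrow>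
        (\<forall>i\<le>n. \<forall>x0 fs. cochain_args (algB act m Sec) n x0 fs \<longrightarrow>
           psi2 act m (sbar (algA HomSec) n i c) x0 fs
             = sbar (algB act m Sec) n i (psi2 act m c) x0 fs))
   \<and> \<comment> \<open>Psi_2 b = b Psi_2\<close>
     (\<forall>c. cochain_on (algA HomSec) n c \<and> invariant_cochain act m HomSec n c \<longrightarrow>
        (\<forall>x0 fs. cochain_args (algB act m Sec) (Suc n) x0 fs \<longrightarrow>
           psi2 act m (bop (algA HomSec) n c) x0 fs = bop (algB act m Sec) n (psi2 act m c) x0 fs))
   \<and> \<comment> \<open>Psi_2 B = B Psi_2\<close>
     (\<forall>c. cochain_on (algA HomSec) (Suc n) c \<and> invariant_cochain act m HomSec (Suc n) c \<longrightarrow>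
        (\<forall>x0 fs. cochain_args (algB act m Sec) n x0 fs \<longrightarrow>
           psi2 act m (Bop (algA HomSec) n c) x0 fs = Bop (algB act m Sec) n (psi2 act m c) x0 fs))"
proof -
  interpret gd act m Sec HomSec by (rule gd.intro) (rule assms)
  have D: "psi2 act m (dface (algA HomSec) n i c) x0 fs = dface (algB act m Sec) n i (psi2 act m c) x0 fs"
    if c: "cochain_on (algA HomSec) n c" "invariant_cochain act m HomSec n c" and i: "i \<le> Suc n"
      and a: "cochain_args (algB act m Sec) (Suc n) x0 fs" for c i x0 fs
  proof -
    obtain l f0 where x0: "x0 = (l, f0)" by (cases x0)
    have f0: "f0 \<in> CB" and fs: "length fs = Suc n" "set fs \<subseteq> CB" using a by (auto simp: cochain_args_def x0)
    show ?thesis unfolding x0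
    proof (cases i)
      case 0 then show "psi2 act m (dface A n i c) (l, f0) fs = dface B n i (psi2 act m c) (l, f0) fs"
        using d0[OF c(1) f0 fs] by simp
    next
      case (Suc j)
      show "psi2 act m (dface A n i c) (l, f0) fs = dface B n i (psi2 act m c) (l, f0) fs"
      proof (cases "i \<le> n")
        case True then show ?thesis using dmid[OF c(1) f0 fs Suc] by simp
      next
        case False then have "i = Suc n" using i by simp
        then show ?thesis using dlast[OF c f0 fs] by simp
      qed
    qed
  qed
  have S: "psi2 act m (sbar (algA HomSec) n i c) x0 fs = sbar (algB act m Sec) n i (psi2 act m c) x0 fs"
    if c: "cochain_on (algA HomSec) (Suc n) c" "invariant_cochain act m HomSec (Suc n) c" and i: "i \<le> n"
      and a: "cochain_args (algB act m Sec) n x0 fs" for c i x0 fs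
  proof -
    obtain l f0 where x0: "x0 = (l, f0)" by (cases x0)
    have f0: "f0 \<in> CB" and fs: "length fs = n" "set fs \<subseteq> CB" using a by (auto simp: cochain_args_def x0)
    show ?thesis unfolding x0 using sb[OF c f0 fs i] .
  qed
  show ?thesis
  proof (intro conjI allI impI)
    fix c i x0 fs assume "cochain_on (algA HomSec) n c \<and> invariant_cochain act m HomSec n c" "i \<le> Suc n"
      "cochain_args (algB act m Sec) (Suc n) x0 fs"
    then show "psi2 act m (dface (algA HomSec) n i c) x0 fs = dface (algB act m Sec) n i (psi2 act m c) x0 fs"
      using D by blast
  next
    fix c i x0 fs assume "cochain_on (algA HomSec) (Suc n) c \<and> invariant_cochain act m HomSec (Suc n) c" "i \<le> n"
      "cochain_args (algB act m Sec) n x0 fs"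
    then show "psi2 act m (sbar (algA HomSec) n i c) x0 fs = sbar (algB act m Sec) n i (psi2 act m c) x0 fs"
      using S by blast
  next
    fix c x0 fs assume h: "cochain_on (algA HomSec) n c \<and> invariant_cochain act m HomSec n c"
      "cochain_args (algB act m Sec) (Suc n) x0 fs"
    show "psi2 act m (bop (algA HomSec) n c) x0 fs = bop (algB act m Sec) n (psi2 act m c) x0 fs"
      unfolding bop_def psi2_sum using D h by (intro sum.cong refl) auto
  next
    fix c x0 fs assume h: "cochain_on (algA HomSec) (Suc n) c \<and> invariant_cochain act m HomSec (Suc n) c"
      "cochain_args (algB act m Sec) n x0 fs"
    show "psi2 act m (Bop (algA HomSec) n c) x0 fs = Bop (algB act m Sec) n (psi2 act m c) x0 fs"
      unfolding Bop_def psi2_sum using S h by (intro sum.cong refl) auto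
  qed
qed


end
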